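(* Let $A$ be an $\mathfrak h$-trivial formal deformation of the $\mathfrak a$-algebra $U(\mathfrak{sl}_2)$. Then $A$ is $\mathfrak b$-trivial: there exists a $\mathbb k[[h]]$-algebra isomorphism $g:U(\mathfrak{sl}_2)[[h]]\to A$ such that $g(H)=H$, $g(X^-)=X^-$, and $\bar g:U(\mathfrak{sl}_2)\to A/hA$ is an isomorphism of $\mathfrak a$-algebras. Moreover, such a $g$ is unique.
   Context: $\mathbb k$ is a field of characteristic zero, and $\mathbb k[[h]]$ is the ring of formal power series over $\mathbb k$. For a $\mathbb k$-vector space $V_0$, $V_0[[h]]$ denotes the module of formal series $\sum_{m\ge0}v_mh^m$ with $v_m\in V_0$. A $\mathbb k[[h]]$-module is topologically free if it is isomorphic to some $V_0[[h]]$. For a $\mathbb k[[h]]$-linear map $g$, $\bar g$ denotes the induced map modulo $h$. $\mathfrak a$ is the Lie algebra over $\mathbb k$ generated by $H,X^-,X^+$ subject to $[H,X^\pm]=\pm2X^\pm$. An $\mathfrak a$-algebra is an algebra with a structural homomorphism from $U(\mathfrak a)$; homomorphisms of such algebras commute with structural maps. $U(\mathfrak{sl}_2)$ is an $\mathfrak a$-algebra via the canonical projection (Chevalley generators $H,X^\pm$). We set $U_h(\mathfrak a):=U(\mathfrak a)[[h]]$. A formal deformation of the $\mathfrak a$-algebra $U(\mathfrak{sl}_2)$ is a $U_h(\mathfrak a)$-algebra $A$ that is topologically free as a $\mathbb k[[h]]$-module, with $A/hA\cong U(\mathfrak{sl}_2)$ as $\mathfrak a$-algebras (here $A/hA$ is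 an $\mathfrak a$-algebra via $U_h(\mathfrak a)/h\cong U(\mathfrak a)$). The images of $H,X^\pm$ in $A$ are again denoted $H,X^\pm$. Such an $A$ is $\mathfrak h$-trivial if there is a $\mathbb k[[h]]$-algebra isomorphism $g:U(\mathfrak{sl}_2)[[h]]\to A$ with $g(H)=H$ and $\bar g$ an isomorphism of $\mathfrak a$-algebras. *)

theory Defs
  imports "HOL-Library.Poly_Mapping" "HOL-Computational_Algebra.Formal_Power_Series"
begin

datatype gen = GH | GXm | GXp

datatype word = Word "gen list"

instantiation word :: monoid_add
begin
definition zero_word :: word where "zero_word = Word []"
fun plus_word :: "word \<Rightarrow> word \<Rightarrow> word" where
  "plus_word (Word a) (Word b) = Word (a @ b)"
instance
proof
  fix a b c :: word
  show "a + b + c = a + (b + c)" by (cases a; cases b; cases c) simp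
  show "0 + a = a" by (cases a) (simp add: zero_word_def)
  show "a + 0 = a" by (cases a) (simp add: zero_word_def)
qed
end

text \<open>Noncommutative polynomials over k in the letters H, X^-, X^+ (the tensor algebra).\<close>
type_synonym 'k freealg = "word \<Rightarrow>\<^sub>0 'k"

definition fgen :: "gen \<Rightarrow> 'k::ring_1 freealg" where
  "fgen x = Poly_Mapping.single (Word [x]) 1"


lemma word_sum_zero: "((0::word) = l + q) \<longleftrightarrow> l = 0 \<and> q = 0"
  by (cases l; cases q) (auto simp: zero_word_def)

lemma lookup_times_zero:
  fixes x y :: "word \<Rightarrow>\<^sub>0 'k::comm_ring_1"
  shows "Poly_Mapping.lookup (x * y) 0 = Poly_Mapping.lookup x 0 * Poly_Mapping.lookup y 0"
proof -
  have "Poly_Mapping.lookup (x * y) 0 = prod_fun (Poly_Mapping.lookup x) (Poly_Mapping.lookup y) 0"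
    by (simp add: times_poly_mapping.rep_eq)
  also have "\<dots> = (\<Sum>l. Poly_Mapping.lookup x l * (\<Sum>r. Poly_Mapping.lookup y r when 0 = l + r))"
    by (simp add: prod_fun_def)
  also have "(\<lambda>l. Poly_Mapping.lookup x l * (\<Sum>r. Poly_Mapping.lookup y r when 0 = l + r))
      = (\<lambda>l. Poly_Mapping.lookup x l * Poly_Mapping.lookup y 0 when l = 0)"
  proof
    fix l show "Poly_Mapping.lookup x l * (\<Sum>r. Poly_Mapping.lookup y r when 0 = l + r)
        = (Poly_Mapping.lookup x l * Poly_Mapping.lookup y 0 when l = 0)"
      by (cases "l = 0") (simp_all add: word_sum_zero when_def)
  qed
  finally show ?thesis by simp
qed

lemma lookup_fgen_zero: "Poly_Mapping.lookup (fgen x :: 'k::comm_ring_1 freealg) 0 = 0"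
  by (simp add: fgen_def lookup_single when_def zero_word_def)

definition sl2_rels :: "'k::comm_ring_1 freealg set" where
  "sl2_rels = { fgen GH * fgen GXp - fgen GXp * fgen GH - 2 * fgen GXp,
                fgen GH * fgen GXm - fgen GXm * fgen GH + 2 * fgen GXm,
                fgen GXp * fgen GXm - fgen GXm * fgen GXp - fgen GH }"

inductive_set sl2_ideal :: "'k::comm_ring_1 freealg set" where
  zero: "0 \<in> sl2_ideal"
| gen: "r \<in> sl2_rels \<Longrightarrow> a * r * b \<in> sl2_ideal"
| add: "x \<in> sl2_ideal \<Longrightarrow> y \<in> sl2_ideal \<Longrightarrow> x + y \<in> sl2_ideal"

lemma sl2_ideal_uminus: "x \<in> sl2_ideal \<Longrightarrow> - x \<in> sl2_ideal"
proof (induction rule: sl2_ideal.induct)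
  case zero then show ?case by (simp add: sl2_ideal.zero)
next
  case (gen r a b)
  then have "(- a) * r * b \<in> sl2_ideal" by (rule sl2_ideal.gen)
  then show ?case by simp
next
  case (add x y) then show ?case using sl2_ideal.add[of "-x" "-y"] by (simp add: add.commute)
qed

lemma sl2_ideal_diff:
  assumes "x \<in> sl2_ideal" "y \<in> sl2_ideal" shows "x - y \<in> sl2_ideal"
proof -
  have "x + - y \<in> sl2_ideal" using assms sl2_ideal.add sl2_ideal_uminus by blast
  then show ?thesis by simp
qed

lemma sl2_ideal_multl: "x \<in> sl2_ideal \<Longrightarrow> c * x \<in> sl2_ideal"
proof (induction rule: sl2_ideal.induct)
  case zero then show ?case by (simp add: sl2_ideal.zero)
next
  case (gen r a b)
  then have "(c * a) * r * b \<in> sl2_ideal" by (rule sl2_ideal.gen)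
  then show ?case by (simp add: mult.assoc)
next
  case (add x y) then show ?case using sl2_ideal.add by (simp add: distrib_left)
qed

lemma sl2_ideal_multr: "x \<in> sl2_ideal \<Longrightarrow> x * c \<in> sl2_ideal"
proof (induction rule: sl2_ideal.induct)
  case zero then show ?case by (simp add: sl2_ideal.zero)
next
  case (gen r a b)
  then have "a * r * (b * c) \<in> sl2_ideal" by (rule sl2_ideal.gen)
  then show ?case by (simp add: mult.assoc)
next
  case (add x y) then show ?case using sl2_ideal.add by (simp add: distrib_right)
qed


lemma sl2_ideal_augmentation: "x \<in> sl2_ideal \<Longrightarrow> Poly_Mapping.lookup x 0 = 0"
proof (induction rule: sl2_ideal.induct)
  case zero then show ?case by simp
next
  case (gen r a b)
  then have "Poly_Mapping.lookup r 0 = 0"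
    by (auto simp: sl2_rels_def lookup_minus lookup_add lookup_times_zero lookup_fgen_zero)
  then show ?case by (simp add: lookup_times_zero)
next
  case (add x y) then show ?case by (simp add: lookup_add)
qed

lemma one_notin_sl2_ideal: "(0::'k::comm_ring_1 freealg) - 1 \<notin> sl2_ideal"
proof
  assume "(0::'k freealg) - 1 \<in> sl2_ideal"
  then have "Poly_Mapping.lookup ((0::'k freealg) - 1) 0 = 0" by (rule sl2_ideal_augmentation)
  then show False by (simp add: lookup_minus)
qed

definition sl2_rel :: "'k::comm_ring_1 freealg \<Rightarrow> 'k freealg \<Rightarrow> bool" where
  "sl2_rel x y \<longleftrightarrow> x - y \<in> sl2_ideal"

lemma equivp_sl2_rel: "equivp sl2_rel"
proof (rule equivpI)
  show "reflp sl2_rel" by (auto intro: reflpI simp: sl2_rel_def sl2_ideal.zero)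
  show "symp sl2_rel"
    by (rule sympI) (metis sl2_rel_def sl2_ideal_uminus minus_diff_eq)
  show "transp sl2_rel"
  proof (rule transpI)
    fix x y z assume "sl2_rel x y" "sl2_rel y z"
    then have a: "x - y \<in> sl2_ideal" "y - z \<in> sl2_ideal" by (simp_all add: sl2_rel_def)
    have "(x - y) + (y - z) \<in> sl2_ideal" by (rule sl2_ideal.add[OF a])
    then show "sl2_rel x z" by (simp add: sl2_rel_def)
  qed
qed

quotient_type (overloaded) 'k usl2 = "'k::comm_ring_1 freealg" / sl2_rel
  by (rule equivp_sl2_rel)

lemma sl2_rel_refl[simp]: "sl2_rel x x"
  by (simp add: sl2_rel_def sl2_ideal.zero)

instantiation usl2 :: (comm_ring_1) ring_1
begin
lift_definition zero_usl2 :: "'a usl2" is 0 .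
lift_definition one_usl2 :: "'a usl2" is 1 .
lift_definition plus_usl2 :: "'a usl2 \<Rightarrow> 'a usl2 \<Rightarrow> 'a usl2" is "(+)"
proof -
  fix x x' y y' :: "'a freealg"
  assume "sl2_rel x x'" "sl2_rel y y'"
  then have "(x - x') + (y - y') \<in> sl2_ideal" by (auto simp: sl2_rel_def intro: sl2_ideal.add)
  then show "sl2_rel (x + y) (x' + y')" by (simp add: sl2_rel_def algebra_simps)
qed
lift_definition uminus_usl2 :: "'a usl2 \<Rightarrow> 'a usl2" is uminus
proof -
  fix x x' :: "'a freealg"
  assume "sl2_rel x x'"
  then have "x - x' \<in> sl2_ideal" by (simp add: sl2_rel_def)
  then have "- (x - x') \<in> sl2_ideal" by (rule sl2_ideal_uminus)
  then show "sl2_rel (- x) (- x')" by (simp add: sl2_rel_def algebra_simps)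
qed
lift_definition minus_usl2 :: "'a usl2 \<Rightarrow> 'a usl2 \<Rightarrow> 'a usl2" is "(-)"
proof -
  fix x x' y y' :: "'a freealg"
  assume "sl2_rel x x'" "sl2_rel y y'"
  then have "(x - x') - (y - y') \<in> sl2_ideal" by (auto simp: sl2_rel_def intro: sl2_ideal_diff)
  then show "sl2_rel (x - y) (x' - y')" by (simp add: sl2_rel_def algebra_simps)
qed
lift_definition times_usl2 :: "'a usl2 \<Rightarrow> 'a usl2 \<Rightarrow> 'a usl2" is "(*)"
proof -
  fix x x' y y' :: "'a freealg"
  assume "sl2_rel x x'" "sl2_rel y y'"
  then have "(x - x') * y \<in> sl2_ideal" "x' * (y - y') \<in> sl2_ideal"
    by (auto simp: sl2_rel_def intro: sl2_ideal_multl sl2_ideal_multr)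
  then have "(x - x') * y + x' * (y - y') \<in> sl2_ideal" by (rule sl2_ideal.add)
  then show "sl2_rel (x * y) (x' * y')"
    by (simp add: sl2_rel_def algebra_simps)
qed
instance
proof
  show "(0::'a usl2) \<noteq> 1"
    using one_notin_sl2_ideal[where 'k='a] by transfer (simp add: sl2_rel_def)
qed (transfer; simp add: algebra_simps)+
end

lift_definition usl2_of :: "'k::comm_ring_1 \<Rightarrow> 'k usl2" is "\<lambda>c. Poly_Mapping.single 0 c" .
lift_definition usl2_H :: "'k::comm_ring_1 usl2" is "fgen GH" .
lift_definition usl2_Xm :: "'k::comm_ring_1 usl2" is "fgen GXm" .
lift_definition usl2_Xp :: "'k::comm_ring_1 usl2" is "fgen GXp" .


text \<open>A k[[h]]-algebra: a unital ring A together with a central unital ring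
  homomorphism \<iota> : k[[h]] \<rightarrow> A (the scalar action is f \<cdot> a = \<iota> f * a).\<close>
definition kh_algebra :: "('k::comm_ring_1 fps \<Rightarrow> 'a::ring_1) \<Rightarrow> bool" where
  "kh_algebra \<iota> \<longleftrightarrow> \<iota> 1 = 1 \<and> (\<forall>f g. \<iota> (f + g) = \<iota> f + \<iota> g) \<and>
     (\<forall>f g. \<iota> (f * g) = \<iota> f * \<iota> g) \<and> (\<forall>f a. \<iota> f * a = a * \<iota> f)"

definition fps_act :: "('k::comm_ring_1 \<Rightarrow> 'v::comm_monoid_add \<Rightarrow> 'v) \<Rightarrow> 'k fps \<Rightarrow> 'v fps \<Rightarrow> 'v fps" where
  "fps_act sc f v = Abs_fps (\<lambda>n. \<Sum>i\<le>n. sc (fps_nth f i) (fps_nth v (n - i)))"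

text \<open>A is topologically free, witnessed by a k-vector space (V0, sc) and a
  k[[h]]-linear bijection \<phi> : V0[[h]] \<rightarrow> A.\<close>
definition top_free_via ::
  "('k::field \<Rightarrow> 'v::ab_group_add \<Rightarrow> 'v) \<Rightarrow> ('v fps \<Rightarrow> 'a::ring_1) \<Rightarrow> ('k fps \<Rightarrow> 'a) \<Rightarrow> bool" where
  "top_free_via sc \<phi> \<iota> \<longleftrightarrow> Vector_Spaces.vector_space sc \<and> bij \<phi> \<and>
     (\<forall>x y. \<phi> (x + y) = \<phi> x + \<phi> y) \<and> (\<forall>f x. \<phi> (fps_act sc f x) = \<iota> f * \<phi> x)"

text \<open>The U_h(a)-algebra structure: images H, X^-, X^+ of the generators,
  satisfying [H, X^+] = 2 X^+ and [H, X^-] = -2 X^-.\<close>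
definition a_relations :: "'a::ring_1 \<Rightarrow> 'a \<Rightarrow> 'a \<Rightarrow> bool" where
  "a_relations H Xm Xp \<longleftrightarrow> H * Xp - Xp * H = 2 * Xp \<and> H * Xm - Xm * H = - (2 * Xm)"

text \<open>An isomorphism A/hA \<cong> U(sl_2) of a-algebras, presented as a surjective
  algebra map \<pi> : A \<rightarrow> U(sl_2) with kernel hA (k = k[[h]]/h acting through the constant term)
  sending H, X^-, X^+ to the Chevalley generators.\<close>
definition reduction_iso ::
  "('k::field fps \<Rightarrow> 'a::ring_1) \<Rightarrow> ('a \<Rightarrow> 'k usl2) \<Rightarrow> 'a \<Rightarrow> 'a \<Rightarrow> 'a \<Rightarrow> bool" where
  "reduction_iso \<iota> \<pi> H Xm Xp \<longleftrightarrow> surj \<pi> \<and> \<pi> 1 = 1 \<and>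
     (\<forall>a b. \<pi> (a + b) = \<pi> a + \<pi> b) \<and> (\<forall>a b. \<pi> (a * b) = \<pi> a * \<pi> b) \<and>
     (\<forall>f a. \<pi> (\<iota> f * a) = usl2_of (fps_nth f 0) * \<pi> a) \<and>
     (\<forall>a. \<pi> a = 0 \<longleftrightarrow> (\<exists>b. a = \<iota> fps_X * b)) \<and>
     \<pi> H = usl2_H \<and> \<pi> Xm = usl2_Xm \<and> \<pi> Xp = usl2_Xp"

definition formal_deformation ::
  "('k::field \<Rightarrow> 'v::ab_group_add \<Rightarrow> 'v) \<Rightarrow> ('v fps \<Rightarrow> 'a::ring_1) \<Rightarrow> ('k fps \<Rightarrow> 'a) \<Rightarrow> 'a \<Rightarrow> 'a \<Rightarrow> 'a \<Rightarrow> bool" where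
  "formal_deformation sc \<phi> \<iota> H Xm Xp \<longleftrightarrow> kh_algebra \<iota> \<and> top_free_via sc \<phi> \<iota> \<and>
     a_relations H Xm Xp \<and> (\<exists>\<pi>. reduction_iso \<iota> \<pi> H Xm Xp)"

definition kh_scal :: "'k::comm_ring_1 fps \<Rightarrow> 'k usl2 fps" where
  "kh_scal f = Abs_fps (\<lambda>n. usl2_of (fps_nth f n))"

definition kh_alg_iso :: "('k::field fps \<Rightarrow> 'a::ring_1) \<Rightarrow> ('k usl2 fps \<Rightarrow> 'a) \<Rightarrow> bool" where
  "kh_alg_iso \<iota> g \<longleftrightarrow> bij g \<and> g 1 = 1 \<and> (\<forall>x y. g (x + y) = g x + g y) \<and>
     (\<forall>x y. g (x * y) = g x * g y) \<and> (\<forall>f x. g (kh_scal f * x) = \<iota> f * g x)"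

definition modh :: "('k::comm_ring_1 fps \<Rightarrow> 'a::ring_1) \<Rightarrow> 'a \<Rightarrow> 'a \<Rightarrow> bool" where
  "modh \<iota> a b \<longleftrightarrow> (\<exists>c. a - b = \<iota> fps_X * c)"

text \<open>The reduction gbar : U(sl_2) \<rightarrow> A/hA, u \<mapsto> [g(u)], is an isomorphism of
  a-algebras (k-algebra isomorphism sending H, X^-, X^+ to the classes of H, X^-, X^+ in A).\<close>
definition bar_a_iso ::
  "('k::field fps \<Rightarrow> 'a::ring_1) \<Rightarrow> ('k usl2 fps \<Rightarrow> 'a) \<Rightarrow> 'a \<Rightarrow> 'a \<Rightarrow> 'a \<Rightarrow> bool" where
  "bar_a_iso \<iota> g H Xm Xp \<longleftrightarrow>
     modh \<iota> (g (fps_const 1)) 1 \<and>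
     (\<forall>u v. modh \<iota> (g (fps_const (u + v))) (g (fps_const u) + g (fps_const v))) \<and>
     (\<forall>u v. modh \<iota> (g (fps_const (u * v))) (g (fps_const u) * g (fps_const v))) \<and>
     (\<forall>c u. modh \<iota> (g (fps_const (usl2_of c * u))) (\<iota> (fps_const c) * g (fps_const u))) \<and>
     (\<forall>u. modh \<iota> (g (fps_const u)) 0 \<longrightarrow> u = 0) \<and>
     (\<forall>a. \<exists>u. modh \<iota> a (g (fps_const u))) \<and>
     modh \<iota> (g (fps_const usl2_H)) H \<and> modh \<iota> (g (fps_const usl2_Xm)) Xm \<and>
     modh \<iota> (g (fps_const usl2_Xp)) Xp"

definition h_trivial :: "('k::field fps \<Rightarrow> 'a::ring_1) \<Rightarrow> 'a \<Rightarrow> 'a \<Rightarrow> 'a \<Rightarrow> bool" where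
  "h_trivial \<iota> H Xm Xp \<longleftrightarrow>
     (\<exists>g. kh_alg_iso \<iota> g \<and> g (fps_const usl2_H) = H \<and> bar_a_iso \<iota> g H Xm Xp)"

end

theory Submission
  imports Defs
begin


lemma usl2_of_1[simp]: "usl2_of 1 = (1::'k::comm_ring_1 usl2)"
  by transfer (simp add: one_poly_mapping_def)
lemma usl2_of_0[simp]: "usl2_of 0 = (0::'k::comm_ring_1 usl2)"
  by transfer simp
lemma usl2_of_add: "usl2_of (a + b) = (usl2_of a + usl2_of b :: 'k::comm_ring_1 usl2)"
  by transfer (simp add: single_add)
lemma usl2_of_mult: "usl2_of (a * b) = (usl2_of a * usl2_of b :: 'k::comm_ring_1 usl2)"
  by transfer (simp add: mult_single)
lemma usl2_of_minus: "usl2_of (a - b) = (usl2_of a - usl2_of b :: 'k::comm_ring_1 usl2)"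
  by transfer (simp add: single_diff)
lemma usl2_of_uminus: "usl2_of (- b) = (- usl2_of b :: 'k::comm_ring_1 usl2)"
  by transfer (simp add: single_uminus)

lemma pm_expand: "p = (\<Sum>w\<in>Poly_Mapping.keys p. Poly_Mapping.single w (Poly_Mapping.lookup p w))"
proof (rule poly_mapping_eqI)
  fix k
  have "Poly_Mapping.lookup p k = (\<Sum>x\<in>Poly_Mapping.keys p. if k = x then Poly_Mapping.lookup p x else 0)"
  proof (cases "k \<in> Poly_Mapping.keys p")
    case True then show ?thesis by (subst sum.delta') (auto simp: finite_keys)
  next
    case False then show ?thesis by (subst sum.delta') (auto simp: in_keys_iff finite_keys)
  qed
  then show "Poly_Mapping.lookup p k = Poly_Mapping.lookup (\<Sum>w\<in>Poly_Mapping.keys p. Poly_Mapping.single w (Poly_Mapping.lookup p w)) k"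
    by (simp add: lookup_sum lookup_single when_def)
qed

abbreviation qa :: "(word \<Rightarrow>\<^sub>0 'k::comm_ring_1) \<Rightarrow> 'k usl2" where "qa \<equiv> abs_usl2"

lemma qa_add: "qa (p + q) = qa p + qa q" by (simp add: plus_usl2.abs_eq)
lemma qa_mult: "qa (p * q) = qa p * qa q" by (simp add: times_usl2.abs_eq)
lemma qa_zero: "qa 0 = 0" by (simp add: zero_usl2.abs_eq)
lemma qa_sum: "qa (sum f S) = (\<Sum>x\<in>S. qa (f x))"
  by (induction S rule: infinite_finite_induct) (auto simp: qa_add qa_zero)
lemma qa_surj: "\<exists>p. u = qa p" by (induct u rule: usl2.abs_induct) auto
lemma qa_single0: "qa (Poly_Mapping.single 0 c) = usl2_of c" by (simp add: usl2_of.abs_eq)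

fun gu :: "gen \<Rightarrow> 'k::comm_ring_1 usl2" where
  "gu GH = usl2_H" | "gu GXm = usl2_Xm" | "gu GXp = usl2_Xp"

lemma qa_fgen: "qa (fgen x) = gu x"
  by (cases x) (simp_all add: usl2_H.abs_eq usl2_Xm.abs_eq usl2_Xp.abs_eq)

fun mon :: "gen list \<Rightarrow> 'k::comm_ring_1 usl2" where
  "mon [] = 1" | "mon (x # l) = gu x * mon l"

lemma mon_append: "mon (l @ m) = mon l * mon m"
  by (induction l) (simp_all add: mult.assoc)

lemma qa_single: "qa (Poly_Mapping.single (Word l) c) = usl2_of c * mon l"
proof (induction l)
  case Nil then show ?case by (simp add: zero_word_def[symmetric] qa_single0)
next
  case (Cons x l)
  have "Poly_Mapping.single (Word (x # l)) c = fgen x * Poly_Mapping.single (Word l) c"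
    by (simp add: fgen_def mult_single)
  then show ?case
  proof -
    have "usl2_of c * gu x = gu x * usl2_of c"
      by (cases x; simp; transfer; simp add: mult_single zero_word_def fgen_def)
    then show ?thesis
      using Cons \<open>Poly_Mapping.single (Word (x # l)) c = fgen x * Poly_Mapping.single (Word l) c\<close>
      by (simp add: qa_mult qa_fgen mult.assoc[symmetric])
  qed
qed

lemma qa_one: "qa 1 = 1" by (simp add: one_usl2.abs_eq)
lemma qa_diff: "qa (p - q) = qa p - qa q" by (simp add: minus_usl2.abs_eq)
lemma qa_two: "qa 2 = 2"
  by (metis one_add_one qa_add qa_one)

lemma qa_rel0: "r \<in> sl2_rels \<Longrightarrow> qa r = 0"
proof -
  assume "r \<in> sl2_rels"
  then have "1 * r * 1 \<in> sl2_ideal" by (rule sl2_ideal.gen)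
  then have "sl2_rel r 0" by (simp add: sl2_rel_def)
  then show "qa r = 0" by (simp add: usl2.abs_eq_iff qa_zero[symmetric])
qed

lemma rel_p: "usl2_H * usl2_Xp - usl2_Xp * usl2_H = (2::'k::comm_ring_1 usl2) * usl2_Xp"
  using qa_rel0[of "(fgen GH::word \<Rightarrow>\<^sub>0 'k) * fgen GXp - fgen GXp * fgen GH - 2 * fgen GXp"]
  by (simp add: sl2_rels_def qa_diff qa_mult qa_fgen qa_two)
lemma rel_m: "usl2_H * usl2_Xm - usl2_Xm * usl2_H = - ((2::'k::comm_ring_1 usl2) * usl2_Xm)"
  using qa_rel0[of "(fgen GH::word \<Rightarrow>\<^sub>0 'k) * fgen GXm - fgen GXm * fgen GH + 2 * fgen GXm"]
  by (simp add: sl2_rels_def qa_diff qa_mult qa_fgen qa_two qa_add eq_neg_iff_add_eq_0)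
lemma rel_pm: "usl2_Xp * usl2_Xm - usl2_Xm * usl2_Xp = (usl2_H::'k::comm_ring_1 usl2)"
  using qa_rel0[of "(fgen GXp::word \<Rightarrow>\<^sub>0 'k) * fgen GXm - fgen GXm * fgen GXp - fgen GH"]
  by (simp add: sl2_rels_def qa_diff qa_mult qa_fgen)

fun unw :: "word \<Rightarrow> gen list" where "unw (Word l) = l"

lemma span: "\<exists>S c. finite S \<and> u = (\<Sum>l\<in>S. usl2_of (c l) * mon l)"
proof -
  obtain p where u: "u = qa p" using qa_surj by blast
  have "u = (\<Sum>w\<in>Poly_Mapping.keys p. qa (Poly_Mapping.single w (Poly_Mapping.lookup p w)))"
    by (subst u, subst pm_expand) (simp add: qa_sum)
  also have "\<dots> = (\<Sum>w\<in>Poly_Mapping.keys p. usl2_of (Poly_Mapping.lookup p (Word (unw w))) * mon (unw w))"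
    by (rule sum.cong, simp) (metis qa_single unw.simps word.exhaust)
  also have "\<dots> = (\<Sum>l\<in>unw ` Poly_Mapping.keys p. usl2_of (Poly_Mapping.lookup p (Word l)) * mon l)"
  proof -
    have "inj unw" by (rule injI) (metis unw.simps word.exhaust)
    then show ?thesis by (subst sum.reindex) (auto intro: inj_on_subset)
  qed
  finally show ?thesis by (intro exI[of _ "unw ` Poly_Mapping.keys p"] exI) (simp add: finite_keys)
qed

lemma usl2_of_gu: "usl2_of c * gu x = gu x * usl2_of c"
  by (cases x; simp; transfer; simp add: mult_single zero_word_def fgen_def)

lemma usl2_of_mon: "usl2_of c * mon l = mon l * usl2_of c"
  by (induction l) (simp_all add: mult.assoc[symmetric] usl2_of_gu, simp add: mult.assoc)

lemma usl2_of_comm: "usl2_of c * u = u * usl2_of c"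
proof -
  obtain S d where u: "u = (\<Sum>l\<in>S. usl2_of (d l) * mon l)" using span by blast
  show ?thesis unfolding u sum_distrib_left sum_distrib_right
    by (rule sum.cong, simp) (metis mult.assoc usl2_of_mon usl2_of_mult mult.commute)
qed


definition khom :: "('k::comm_ring_1 \<Rightarrow> 'r::ring_1) \<Rightarrow> ('k usl2 \<Rightarrow> 'r) \<Rightarrow> bool" where
  "khom \<sigma> h \<longleftrightarrow> h 1 = 1 \<and> (\<forall>a b. h (a + b) = h a + h b) \<and> (\<forall>a b. h (a * b) = h a * h b) \<and>
     (\<forall>c u. h (usl2_of c * u) = \<sigma> c * h u)"

definition goods :: "('k::comm_ring_1 \<Rightarrow> 'r::ring_1) \<Rightarrow> bool" where
  "goods \<sigma> \<longleftrightarrow> \<sigma> 1 = 1 \<and> (\<forall>a b. \<sigma> (a + b) = \<sigma> a + \<sigma> b) \<and> (\<forall>a b. \<sigma> (a * b) = \<sigma> a * \<sigma> b) \<and>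
     (\<forall>c x. \<sigma> c * x = x * \<sigma> c)"

fun evl :: "(gen \<Rightarrow> 'r::ring_1) \<Rightarrow> gen list \<Rightarrow> 'r" where
  "evl e [] = 1" | "evl e (x # l) = e x * evl e l"

lemma evl_append: "evl e (l @ m) = evl e l * evl e m"
  by (induction l) (simp_all add: mult.assoc)

lemma unw_plus: "unw (w + v) = unw w @ unw v"
  by (cases w; cases v) simp

definition LL :: "('k::comm_ring_1 \<Rightarrow> 'r::ring_1) \<Rightarrow> (gen \<Rightarrow> 'r) \<Rightarrow> (word \<Rightarrow>\<^sub>0 'k) \<Rightarrow> 'r" where
  "LL \<sigma> e p = (\<Sum>w\<in>Poly_Mapping.keys p. \<sigma> (Poly_Mapping.lookup p w) * evl e (unw w))"

context
  fixes \<sigma> :: "'k::comm_ring_1 \<Rightarrow> 'r::ring_1" and e :: "gen \<Rightarrow> 'r"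
  assumes g: "goods \<sigma>"
begin

lemma s0: "\<sigma> 0 = 0"
proof -
  have "\<sigma> (0 + 0) = \<sigma> 0 + \<sigma> 0" using g unfolding goods_def by blast
  then show ?thesis by simp
qed

lemma LL_sup: "finite K \<Longrightarrow> Poly_Mapping.keys p \<subseteq> K \<Longrightarrow>
  LL \<sigma> e p = (\<Sum>w\<in>K. \<sigma> (Poly_Mapping.lookup p w) * evl e (unw w))"
  unfolding LL_def by (rule sum.mono_neutral_left) (auto simp: in_keys_iff s0)

lemma LL_add: "LL \<sigma> e (p + q) = LL \<sigma> e p + LL \<sigma> e q"
proof -
  let ?K = "Poly_Mapping.keys p \<union> Poly_Mapping.keys q"
  have f: "finite ?K" by (simp add: finite_keys)
  have "Poly_Mapping.keys (p + q) \<subseteq> ?K" by (rule keys_add)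
  then have "LL \<sigma> e (p + q) = (\<Sum>w\<in>?K. \<sigma> (Poly_Mapping.lookup (p+q) w) * evl e (unw w))"
    using f by (rule LL_sup[rotated])
  also have "\<dots> = (\<Sum>w\<in>?K. \<sigma> (Poly_Mapping.lookup p w) * evl e (unw w)) + (\<Sum>w\<in>?K. \<sigma> (Poly_Mapping.lookup q w) * evl e (unw w))"
    using g by (simp add: lookup_add goods_def distrib_right sum.distrib)
  also have "\<dots> = LL \<sigma> e p + LL \<sigma> e q"
    using f LL_sup[of ?K p] LL_sup[of ?K q] by auto
  finally show ?thesis .
qed

lemma LL_zero: "LL \<sigma> e 0 = 0" by (simp add: LL_def)

lemma LL_sum: "LL \<sigma> e (sum f S) = (\<Sum>x\<in>S. LL \<sigma> e (f x))"
  by (induction S rule: infinite_finite_induct) (auto simp: LL_add LL_zero)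

lemma LL_uminus: "LL \<sigma> e (- p) = - LL \<sigma> e p"
  using LL_add[of p "-p"] by (simp add: LL_zero) (metis minus_unique)

lemma LL_diff: "LL \<sigma> e (p - q) = LL \<sigma> e p - LL \<sigma> e q"
  using LL_add[of p "-q"] by (simp add: LL_uminus)

lemma LL_single: "LL \<sigma> e (Poly_Mapping.single w a) = \<sigma> a * evl e (unw w)"
  by (cases "a = 0") (simp_all add: LL_def s0)

lemma LL_mult_single: "LL \<sigma> e (Poly_Mapping.single w a * Poly_Mapping.single v b) =
   LL \<sigma> e (Poly_Mapping.single w a) * LL \<sigma> e (Poly_Mapping.single v b)"
proof -
  have "\<sigma> (a * b) * (evl e (unw w) * evl e (unw v)) = \<sigma> a * evl e (unw w) * (\<sigma> b * evl e (unw v))"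
    using g unfolding goods_def by (metis mult.assoc)
  then show ?thesis by (simp add: mult_single LL_single unw_plus evl_append)
qed

lemma LL_mult: "LL \<sigma> e (p * q) = LL \<sigma> e p * LL \<sigma> e q"
proof -
  have "p * q = (\<Sum>v\<in>Poly_Mapping.keys q. \<Sum>w\<in>Poly_Mapping.keys p.
      Poly_Mapping.single w (Poly_Mapping.lookup p w) * Poly_Mapping.single v (Poly_Mapping.lookup q v))"
    by (subst pm_expand[of p], subst pm_expand[of q]) (simp add: sum_distrib_left sum_distrib_right)
  then have "LL \<sigma> e (p * q) = (\<Sum>v\<in>Poly_Mapping.keys q. \<Sum>w\<in>Poly_Mapping.keys p.
      LL \<sigma> e (Poly_Mapping.single w (Poly_Mapping.lookup p w)) * LL \<sigma> e (Poly_Mapping.single v (Poly_Mapping.lookup q v)))"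
    by (simp add: LL_sum LL_mult_single)
  also have "\<dots> = LL \<sigma> e p * LL \<sigma> e q"
    by (subst (3) pm_expand[of p], subst (3) pm_expand[of q]) (simp add: LL_sum sum_distrib_left sum_distrib_right sum.swap[of _ "Poly_Mapping.keys p"])
  finally show ?thesis .
qed

lemma LL_one: "LL \<sigma> e 1 = 1"
proof -
  have "LL \<sigma> e (Poly_Mapping.single 0 1) = \<sigma> 1 * evl e (unw 0)" by (rule LL_single)
  moreover have "unw 0 = []" by (simp add: zero_word_def)
  ultimately show ?thesis using g by (simp add: goods_def)
qed

lemma LL_fgen: "LL \<sigma> e (fgen x) = e x"
  using g by (simp add: fgen_def LL_single goods_def)

lemma LL_two: "LL \<sigma> e 2 = 2"
  by (metis LL_add LL_one one_add_one)

lemma LL_ideal: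
  assumes r1: "e GH * e GXp - e GXp * e GH = 2 * e GXp"
    and r2: "e GH * e GXm - e GXm * e GH = - (2 * e GXm)"
    and r3: "e GXp * e GXm - e GXm * e GXp = e GH"
  shows "x \<in> sl2_ideal \<Longrightarrow> LL \<sigma> e x = 0"
proof (induction rule: sl2_ideal.induct)
  case zero then show ?case by (simp add: LL_zero)
next
  case (gen r a b)
  have "LL \<sigma> e r = 0" using gen r1 r2 r3
    by (auto simp: sl2_rels_def LL_diff LL_add LL_mult LL_fgen LL_two)
  then show ?case by (simp add: LL_mult)
next
  case (add x y) then show ?case by (simp add: LL_add)
qed

end

definition ulift :: "('k::comm_ring_1 \<Rightarrow> 'r::ring_1) \<Rightarrow> (gen \<Rightarrow> 'r) \<Rightarrow> 'k usl2 \<Rightarrow> 'r" where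
  "ulift \<sigma> e u = LL \<sigma> e (rep_usl2 u)"

definition rels :: "(gen \<Rightarrow> 'r::ring_1) \<Rightarrow> bool" where
  "rels e \<longleftrightarrow> e GH * e GXp - e GXp * e GH = 2 * e GXp \<and>
     e GH * e GXm - e GXm * e GH = - (2 * e GXm) \<and> e GXp * e GXm - e GXm * e GXp = e GH"

lemma ulift_qa:
  assumes g: "goods \<sigma>" and r: "rels e"
  shows "ulift \<sigma> e (qa p) = LL \<sigma> e p"
proof -
  have "sl2_rel (rep_usl2 (qa p)) p"
    by (metis Quotient3_rep_abs Quotient3_usl2 equivp_sl2_rel equivp_symp sl2_rel_refl)
  then have "rep_usl2 (qa p) - p \<in> sl2_ideal" by (simp add: sl2_rel_def)
  then have "LL \<sigma> e (rep_usl2 (qa p) - p) = 0"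
    using LL_ideal[OF g] r unfolding rels_def by blast
  then show ?thesis using LL_diff[OF g] by (simp add: ulift_def)
qed

lemma universal:
  assumes g: "goods \<sigma>" and r: "rels e"
  shows "khom \<sigma> (ulift \<sigma> e)" and "ulift \<sigma> e (gu x) = e x"
proof -
  note q = ulift_qa[OF g r]
  show "ulift \<sigma> e (gu x) = e x" using q LL_fgen[OF g] qa_fgen by metis
  show "khom \<sigma> (ulift \<sigma> e)" unfolding khom_def
  proof (intro conjI allI)
    show "ulift \<sigma> e 1 = 1" using q LL_one[OF g] qa_one by metis
    fix a b :: "'a usl2"
    obtain p q' where "a = qa p" "b = qa q'" using qa_surj by metis
    then show "ulift \<sigma> e (a + b) = ulift \<sigma> e a + ulift \<sigma> e b"
      "ulift \<sigma> e (a * b) = ulift \<sigma> e a * ulift \<sigma> e b"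
      using q LL_add[OF g] LL_mult[OF g] qa_add qa_mult by metis+
  next
    fix c and u :: "'a usl2"
    obtain p where "u = qa p" using qa_surj by metis
    then show "ulift \<sigma> e (usl2_of c * u) = \<sigma> c * ulift \<sigma> e u"
      using q LL_mult[OF g] qa_mult qa_single0 LL_single[OF g, where w=0 and a=c]
      by (metis evl.simps(1) mult_1_right unw.simps zero_word_def)
  qed
qed

lemma khom_zero: "khom \<sigma> h \<Longrightarrow> h 0 = 0"
  unfolding khom_def by (metis add_0 add_cancel_right_right)

lemma khom_sum: "khom \<sigma> h \<Longrightarrow> h (sum f S) = (\<Sum>x\<in>S. h (f x))"
  by (induction S rule: infinite_finite_induct) (auto simp: khom_zero, simp add: khom_def)

lemma khom_mon:
  assumes "khom \<sigma> h1" "khom \<sigma> h2" "\<And>x. h1 (gu x) = h2 (gu x)"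
  shows "h1 (mon l) = h2 (mon l)"
proof (induction l)
  case Nil then show ?case using assms by (simp add: khom_def)
next
  case (Cons x l) then show ?case using assms by (simp add: khom_def)
qed

lemma khom_of: "khom \<sigma> h \<Longrightarrow> h (usl2_of c) = \<sigma> c"
  unfolding khom_def by (metis mult_1_right)

lemma generation:
  fixes h1 h2 :: "'k::comm_ring_1 usl2 \<Rightarrow> 'r::ring_1"
  assumes "khom \<sigma> h1" "khom \<sigma> h2" "\<And>x. h1 (gu x) = h2 (gu x)"
  shows "h1 = h2"
proof
  fix u :: "'k usl2"
  obtain S c where u: "u = (\<Sum>l\<in>S. usl2_of (c l) * mon l)" using span by blast
  have "h1 u = (\<Sum>l\<in>S. h1 (usl2_of (c l) * mon l))" unfolding u by (rule khom_sum[OF assms(1)])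
  also have "\<dots> = (\<Sum>l\<in>S. h2 (usl2_of (c l) * mon l))"
  proof (rule sum.cong)
    fix l
    have "h1 (usl2_of (c l) * mon l) = \<sigma> (c l) * h1 (mon l)" using assms(1) unfolding khom_def by blast
    also have "\<dots> = \<sigma> (c l) * h2 (mon l)" using khom_mon[OF assms] by simp
    also have "\<dots> = h2 (usl2_of (c l) * mon l)" using assms(2) unfolding khom_def by metis
    finally show "h1 (usl2_of (c l) * mon l) = h2 (usl2_of (c l) * mon l)" .
  qed simp
  also have "\<dots> = h2 u" unfolding u by (rule khom_sum[OF assms(2), symmetric])
  finally show "h1 u = h2 u" .
qed


abbreviation "uH \<equiv> usl2_H" 
abbreviation "uXm \<equiv> usl2_Xm"
abbreviation "uXp \<equiv> usl2_Xp"

fun wt :: "gen list \<Rightarrow> int" where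
  "wt [] = 0" | "wt (GH # l) = wt l" | "wt (GXm # l) = wt l - 2" | "wt (GXp # l) = wt l + 2"

lemma wt_append: "wt (l @ m) = wt l + wt m"
  by (induction l rule: wt.induct) simp_all

fun wt1 :: "gen \<Rightarrow> int" where "wt1 GH = 0" | "wt1 GXm = -2" | "wt1 GXp = 2"

lemma wt_cons: "wt (x # l) = wt1 x + wt l"
  by (cases x) simp_all

lemma wt_noXm: "GXm \<notin> set l \<Longrightarrow> wt l \<ge> 0"
  by (induction l rule: wt.induct) auto

definition adH :: "'k::comm_ring_1 usl2 \<Rightarrow> 'k usl2" where "adH x = uH * x - x * uH"
definition adE :: "'k::comm_ring_1 usl2 \<Rightarrow> 'k usl2" where "adE x = uXp * x - x * uXp"
definition adF :: "'k::comm_ring_1 usl2 \<Rightarrow> 'k usl2" where "adF x = uXm * x - x * uXm"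

lemma usl2_of_of_nat: "usl2_of (of_nat n) = (of_nat n :: 'k::comm_ring_1 usl2)"
  by (induction n) (simp_all add: usl2_of_add)

lemma usl2_of_of_int: "usl2_of (of_int n) = (of_int n :: 'k::comm_ring_1 usl2)"
  by (cases n) (simp_all add: usl2_of_of_nat usl2_of_uminus usl2_of_minus)

lemma gu_wt: "uH * gu x - gu x * uH = of_int (wt1 x) * (gu x :: 'k::comm_ring_1 usl2)"
  using rel_p[where 'k='k] rel_m[where 'k='k] by (cases x) simp_all

lemma wt_mon: "uH * mon l - mon l * uH = of_int (wt l) * (mon l :: 'k::comm_ring_1 usl2)"
proof (induction l)
  case Nil then show ?case by simp
next
  case (Cons x l)
  have "(uH::'k usl2) * mon (x # l) - mon (x # l) * uH = (uH * gu x - gu x * uH) * mon l + gu x * (uH * mon l - mon l * uH)"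
    by (simp add: algebra_simps)
  also have "\<dots> = of_int (wt1 x) * gu x * mon l + gu x * (of_int (wt l) * mon l)"
    using Cons.IH gu_wt[of x] by metis
  also have "\<dots> = of_int (wt1 x) * (gu x * mon l) + of_int (wt l) * (gu x * mon l)"
    by (metis mult.assoc mult_of_int_commute)
  also have "\<dots> = of_int (wt (x # l)) * mon (x # l)"
    by (simp only: wt_cons of_int_add distrib_right mon.simps)
  finally show ?case .
qed

lemma usl2_cancel:
  fixes d :: "'k::field"
  assumes "d \<noteq> 0" "usl2_of d * x = usl2_of d * y" shows "x = y"
proof -
  have "usl2_of (inverse d) * (usl2_of d * x) = usl2_of (inverse d) * (usl2_of d * y)" using assms by simp
  then show ?thesis using assms(1) by (simp add: mult.assoc[symmetric] usl2_of_mult[symmetric])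
qed

lemma int_cancel:
  assumes "(n::int) \<noteq> 0" "of_int n * x = (of_int n * y :: 'k::field_char_0 usl2)" shows "x = y"
  using usl2_cancel[of "of_int n :: 'k"] assms by (simp add: usl2_of_of_int)


lemma adH_add: "adH (x + y) = adH x + adH y" by (simp add: adH_def algebra_simps)
lemma adH_diff: "adH (x - y) = adH x - adH y" by (simp add: adH_def algebra_simps)
lemma adH_of: "adH (usl2_of c * x) = usl2_of c * adH x"
proof -
  have "uH * usl2_of c = usl2_of c * uH" by (rule usl2_of_comm[symmetric])
  then show ?thesis unfolding adH_def right_diff_distrib by (metis mult.assoc)
qed
lemma adH_int: "adH (of_int k * x) = of_int k * adH x"
  using adH_of[of "of_int k" x] by (simp add: usl2_of_of_int)
lemma adH_zero: "adH 0 = 0" by (simp add: adH_def)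
lemma adH_sum: "adH (sum f S) = (\<Sum>x\<in>S. adH (f x))"
  by (induction S rule: infinite_finite_induct) (simp_all add: adH_add adH_zero)
lemma adH_mon: "adH (mon l) = of_int (wt l) * mon l" by (simp add: adH_def wt_mon)

lemma proj_aux:
  fixes c :: "gen list \<Rightarrow> 'k::field_char_0"
  assumes "finite W" "finite S" "wt ` S \<subseteq> insert lam W"
    "adH (\<Sum>l\<in>S. usl2_of (c l) * mon l) = of_int lam * (\<Sum>l\<in>S. usl2_of (c l) * mon l)"
  shows "(\<Sum>l\<in>S. usl2_of (c l) * mon l) = (\<Sum>l\<in>{l\<in>S. wt l = lam}. usl2_of (c l) * mon l)"
  using assms
proof (induction W arbitrary: S c rule: finite_induct)
  case empty
  then have "{l\<in>S. wt l = lam} = S" by auto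
  then show ?case by simp
next
  case (insert w W S c)
  show ?case
  proof (cases "w = lam")
    case True
    then show ?thesis using insert.IH[of S c] insert.prems by auto
  next
    case False
    define u where "u = (\<Sum>l\<in>S. usl2_of (c l) * mon l)"
    define c' where "c' l = c l * of_int (wt l - w)" for l
    define S' where "S' = {l\<in>S. wt l \<noteq> w}"
    have fS': "finite S'" using insert.prems by (simp add: S'_def)
    have "adH u - of_int w * u = (\<Sum>l\<in>S. usl2_of (c l) * (of_int (wt l) * mon l) - of_int w * (usl2_of (c l) * mon l))"
      unfolding u_def by (simp add: adH_sum adH_of adH_mon sum_distrib_left sum_subtractf)
    also have "\<dots> = (\<Sum>l\<in>S. usl2_of (c' l) * mon l)"
    proof (rule sum.cong)
      fix l
      have "usl2_of (c l) * (of_int (wt l) * mon l) - of_int w * (usl2_of (c l) * mon l)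
          = usl2_of (c l * of_int (wt l)) * mon l - usl2_of (of_int w * c l) * mon l"
        by (simp only: usl2_of_mult usl2_of_of_int mult.assoc)
      also have "\<dots> = usl2_of (c' l) * mon l"
        by (simp only: c'_def left_diff_distrib[symmetric] usl2_of_minus[symmetric]) (simp add: algebra_simps)
      finally show "usl2_of (c l) * (of_int (wt l) * mon l) - of_int w * (usl2_of (c l) * mon l) = usl2_of (c' l) * mon l" .
    qed simp
    also have "\<dots> = (\<Sum>l\<in>S'. usl2_of (c' l) * mon l)"
      by (rule sum.mono_neutral_right) (auto simp: S'_def c'_def insert)
    finally have v1: "adH u - of_int w * u = (\<Sum>l\<in>S'. usl2_of (c' l) * mon l)" .
    have v2: "adH u - of_int w * u = of_int (lam - w) * u"
      using insert.prems(3) by (simp add: u_def algebra_simps)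
    have wS': "wt ` S' \<subseteq> insert lam W" using insert.prems(2) by (auto simp: S'_def)
    have "adH (\<Sum>l\<in>S'. usl2_of (c' l) * mon l) = of_int lam * (\<Sum>l\<in>S'. usl2_of (c' l) * mon l)"
      unfolding v1[symmetric] v2 adH_int using insert.prems(3)
      by (metis u_def mult.assoc mult_of_int_commute)
    then have "(\<Sum>l\<in>S'. usl2_of (c' l) * mon l) = (\<Sum>l\<in>{l\<in>S'. wt l = lam}. usl2_of (c' l) * mon l)"
      using insert.IH[OF fS' wS'] by blast
    also have "{l\<in>S'. wt l = lam} = {l\<in>S. wt l = lam}" using False by (auto simp: S'_def)
    also have "(\<Sum>l\<in>{l\<in>S. wt l = lam}. usl2_of (c' l) * mon l)
        = of_int (lam - w) * (\<Sum>l\<in>{l\<in>S. wt l = lam}. usl2_of (c l) * mon l)"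
      unfolding sum_distrib_left
    proof (rule sum.cong)
      fix l assume "l \<in> {l\<in>S. wt l = lam}"
      then show "usl2_of (c' l) * mon l = of_int (lam - w) * (usl2_of (c l) * mon l)"
        by (simp only: c'_def mem_Collect_eq usl2_of_mult usl2_of_of_int mult.assoc[symmetric] mult_of_int_commute)
    qed simp
    finally have "of_int (lam - w) * u = of_int (lam - w) * (\<Sum>l\<in>{l\<in>S. wt l = lam}. usl2_of (c l) * mon l)"
      using v1 v2 by simp
    then show ?thesis using False int_cancel[of "lam - w"] by (simp add: u_def)
  qed
qed

lemma proj:
  fixes c :: "gen list \<Rightarrow> 'k::field_char_0"
  assumes "finite S" "adH (\<Sum>l\<in>S. usl2_of (c l) * mon l) = of_int lam * (\<Sum>l\<in>S. usl2_of (c l) * mon l)"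
  shows "(\<Sum>l\<in>S. usl2_of (c l) * mon l) = (\<Sum>l\<in>{l\<in>S. wt l = lam}. usl2_of (c l) * mon l)"
  using proj_aux[of "wt ` S" S lam c] assms by blast

inductive inspan :: "nat \<Rightarrow> int \<Rightarrow> 'k::comm_ring_1 usl2 \<Rightarrow> bool" for n lam where
  isz: "inspan n lam 0"
| ism: "length l < n \<Longrightarrow> wt l = lam \<Longrightarrow> inspan n lam (usl2_of c * mon l)"
| isa: "inspan n lam x \<Longrightarrow> inspan n lam y \<Longrightarrow> inspan n lam (x + y)"

lemma inspan_mono: "inspan n lam x \<Longrightarrow> n \<le> m \<Longrightarrow> inspan m lam x"
  by (induction rule: inspan.induct) (auto intro: inspan.intros)

lemma inspan_gu: "inspan n lam x \<Longrightarrow> inspan (Suc n) (wt1 g + lam) (gu g * x)"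
proof (induction rule: inspan.induct)
  case isz then show ?case by (simp add: inspan.isz)
next
  case (ism l c)
  have "gu g * (usl2_of c * mon l) = usl2_of c * mon (g # l)"
    by (simp add: mult.assoc[symmetric] usl2_of_gu)
  moreover have "inspan (Suc n) (wt1 g + lam) (usl2_of c * mon (g # l))"
    using ism by (intro inspan.ism) (simp_all add: wt_cons)
  ultimately show ?case by simp
next
  case (isa x y) then show ?case by (simp add: distrib_left inspan.isa)
qed

lemma inspan_sum: "finite S \<Longrightarrow> (\<And>l. l \<in> S \<Longrightarrow> length l < n \<and> wt l = lam) \<Longrightarrow>
  inspan n lam (\<Sum>l\<in>S. usl2_of (c l) * mon l)"
  by (induction S rule: finite_induct) (auto intro: inspan.intros)

lemma gu_Xm: "x \<noteq> GXm \<Longrightarrow> \<exists>d g. gu x * uXm = (uXm::'k::comm_ring_1 usl2) * gu x + usl2_of d * gu g \<and> wt1 g = wt1 x - 2"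
proof (cases x)
  case GH
  have "gu x * uXm = uXm * gu x + usl2_of (-2) * (gu GXm :: 'k usl2)"
    using rel_m[where 'k='k] GH by (simp add: usl2_of_uminus usl2_of_of_int[of 2, simplified] algebra_simps)
  then show ?thesis using GH by (intro exI[of _ "-2"] exI[of _ GXm]) simp
next
  case GXp
  have "gu x * uXm = uXm * gu x + usl2_of 1 * (gu GH :: 'k usl2)"
    using rel_pm[where 'k='k] GXp by (simp add: algebra_simps)
  then show ?thesis using GXp by (intro exI[of _ 1] exI[of _ GH]) simp
qed simp

lemma push_Xm: "GXm \<notin> set p \<Longrightarrow> \<exists>r. mon p * uXm * mon q = (uXm::'k::comm_ring_1 usl2) * mon (p @ q) + r \<and>
   inspan (length p + 1 + length q) (wt p - 2 + wt q) r"
proof (induction p)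
  case Nil then show ?case by (auto intro: inspan.isz)
next
  case (Cons x p)
  then obtain r where r: "mon p * uXm * mon q = (uXm::'k usl2) * mon (p @ q) + r"
    "inspan (length p + 1 + length q) (wt p - 2 + wt q) r" by auto
  obtain d g where dg: "gu x * uXm = (uXm::'k usl2) * gu x + usl2_of d * gu g" "wt1 g = wt1 x - 2"
    using gu_Xm[of x] Cons.prems by auto
  have "mon (x # p) * (uXm::'k usl2) * mon q = gu x * (mon p * uXm * mon q)" by (simp add: mult.assoc)
  also have "\<dots> = gu x * uXm * mon (p @ q) + gu x * r" using r(1) by (metis distrib_left mult.assoc)
  also have "\<dots> = uXm * mon ((x # p) @ q) + (usl2_of d * mon (g # p @ q) + gu x * r)"
    by (simp add: dg distrib_right mult.assoc)
  finally have e: "mon (x # p) * uXm * mon q = (uXm::'k usl2) * mon ((x # p) @ q) + (usl2_of d * mon (g # p @ q) + gu x * r)" .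
  have i1: "inspan (length (x # p) + 1 + length q) (wt (x # p) - 2 + wt q) (usl2_of d * (mon (g # p @ q)::'k usl2))"
    by (rule inspan.ism) (simp_all add: wt_cons wt_append dg)
  have "inspan (Suc (length p + 1 + length q)) (wt1 x + (wt p - 2 + wt q)) (gu x * r)"
    by (rule inspan_gu[OF r(2)])
  then have i2: "inspan (length (x # p) + 1 + length q) (wt (x # p) - 2 + wt q) (gu x * r)"
    by (simp add: wt_cons algebra_simps)
  show ?case using e i1 i2 inspan.isa by blast
qed

lemma wm2_main: "inspan n (-2) y \<Longrightarrow> \<exists>b. y = (uXm::'k::comm_ring_1 usl2) * b \<and> adH b = 0"
proof (induction n arbitrary: y rule: less_induct)
  case (less n)
  from less.prems show ?case
  proof (induction rule: inspan.induct)
    case isz then show ?case by (intro exI[of _ 0]) (simp add: adH_zero)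
  next
    case (isa x y)
    then obtain b1 b2 where "x = (uXm::'k usl2) * b1" "adH b1 = 0" "y = uXm * b2" "adH b2 = 0" by blast
    then show ?case by (intro exI[of _ "b1 + b2"]) (simp add: adH_add distrib_left)
  next
    case (ism l c)
    have "GXm \<in> set l" using ism wt_noXm by fastforce
    then obtain p q where pq: "l = p @ GXm # q" "GXm \<notin> set p" by (meson split_list_first)
    obtain r where r: "mon p * uXm * mon q = (uXm::'k usl2) * mon (p @ q) + r"
      "inspan (length p + 1 + length q) (wt p - 2 + wt q) r" using push_Xm[OF pq(2)] by blast
    have e2: "wt p - 2 + wt q = -2" using ism pq by (simp add: wt_append)
    have "inspan (length l) (-2) r" using r(2) e2 pq by simp
    then obtain b' where b': "r = uXm * b'" "adH b' = 0" using less.IH ism by blast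
    have w0: "adH (mon (p @ q) :: 'k usl2) = 0" using ism pq by (simp add: adH_mon wt_append)
    have "mon l = mon p * uXm * mon q" by (simp add: pq mon_append mult.assoc)
    also have "\<dots> = uXm * (mon (p @ q) + b')" by (simp add: r b' distrib_left)
    finally have "usl2_of c * mon l = usl2_of c * (uXm * (mon (p @ q) + b'))" by simp
    then have "usl2_of c * mon l = uXm * (usl2_of c * (mon (p @ q) + b'))"
      by (metis mult.assoc usl2_of_comm)
    moreover have "adH (usl2_of c * (mon (p @ q) + b')) = 0" by (simp add: adH_of adH_add w0 b')
    ultimately show ?case by blast
  qed
qed

lemma weight_m2:
  fixes y :: "'k::field_char_0 usl2"
  assumes "adH y = - (2 * y)"
  shows "\<exists>b. y = uXm * b \<and> adH b = 0"
proof -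
  obtain S c where y: "finite S" "y = (\<Sum>l\<in>S. usl2_of (c l) * mon l)" using span by blast
  have hh: "adH (\<Sum>l\<in>S. usl2_of (c l) * mon l) = of_int (-2) * (\<Sum>l\<in>S. usl2_of (c l) * mon l)"
    using assms y by simp
  have "y = (\<Sum>l\<in>{l\<in>S. wt l = -2}. usl2_of (c l) * mon l)" using proj[OF y(1) hh] y(2) by simp
  moreover have "inspan (Suc (\<Sum>l\<in>S. length l)) (-2) (\<Sum>l\<in>{l\<in>S. wt l = -2}. usl2_of (c l) * mon l)"
  proof (rule inspan_sum)
    show "finite {l \<in> S. wt l = -2}" using y by simp
    fix l assume "l \<in> {l \<in> S. wt l = -2}"
    then show "length l < Suc (\<Sum>l\<in>S. length l) \<and> wt l = -2"
      using member_le_sum[of l S length] y(1) by auto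
  qed
  ultimately show ?thesis using wm2_main by metis
qed


lemma r1: "uXp * uXm = uXm * uXp + (uH :: 'k::comm_ring_1 usl2)"
  using rel_pm[where 'k='k] by (simp add: algebra_simps)
lemma r2: "uH * uXm = uXm * uH - uXm - (uXm :: 'k::comm_ring_1 usl2)"
  using rel_m[where 'k='k] by (simp add: algebra_simps mult_2)
lemma r3: "uXp * uH = uH * uXp - uXp - (uXp :: 'k::comm_ring_1 usl2)"
  using rel_p[where 'k='k] by (simp add: algebra_simps mult_2)
lemma r1': "uXp * (uXm * z) = uXm * (uXp * z) + (uH :: 'k::comm_ring_1 usl2) * z"
  by (simp add: mult.assoc[symmetric] r1 distrib_right)
lemma r2': "uH * (uXm * z) = uXm * (uH * z) - uXm * z - (uXm :: 'k::comm_ring_1 usl2) * z"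
  by (simp add: mult.assoc[symmetric] r2 left_diff_distrib)
lemma r3': "uXp * (uH * z) = uH * (uXp * z) - uXp * z - (uXp :: 'k::comm_ring_1 usl2) * z"
  by (simp add: mult.assoc[symmetric] r3 left_diff_distrib)

definition cas :: "'k::comm_ring_1 usl2" where
  "cas = uXp * uXm + uXp * uXm + uXm * uXp + uXm * uXp + uH * uH"

lemma cas_gu: "cas * gu x = gu x * (cas :: 'k::comm_ring_1 usl2)"
  by (cases x) (simp_all add: cas_def algebra_simps r1 r2 r3 r1' r2' r3')

lemma cas_mon: "cas * mon l = mon l * (cas :: 'k::comm_ring_1 usl2)"
proof (induction l)
  case (Cons x l)
  have "(cas::'k usl2) * mon (x # l) = gu x * (cas * mon l)" by (simp add: mult.assoc[symmetric] cas_gu)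
  then show ?case using Cons by (simp add: mult.assoc)
qed simp

lemma cas_central: "cas * u = u * (cas :: 'k::comm_ring_1 usl2)"
proof -
  obtain S c where u: "u = (\<Sum>l\<in>S. usl2_of (c l) * mon l)" using span by blast
  have "(cas::'k usl2) * (usl2_of (c l) * mon l) = (usl2_of (c l) * mon l) * cas" for l
    by (metis cas_mon mult.assoc usl2_of_comm)
  then show ?thesis unfolding u sum_distrib_left sum_distrib_right by (rule sum.cong[OF refl])
qed

lemma four_XpXm: "of_int 4 * (uXp * uXm) = cas + uH + uH - uH * (uH :: 'k::comm_ring_1 usl2)"
proof -
  have x: "uXm * uXp = uXp * uXm - (uH :: 'k usl2)" by (simp add: r1)
  have "(of_int 4 :: 'k usl2) = 1 + 1 + 1 + 1" by simp
  then have "of_int 4 * (uXp * uXm) = uXp * uXm + uXp * uXm + uXp * uXm + (uXp * uXm :: 'k usl2)"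
    by (simp only: distrib_right mult_1_left)
  also have "\<dots> = cas + uH + uH - uH * uH" by (simp add: cas_def x algebra_simps)
  finally show ?thesis .
qed

lemma XpXm_comm:
  fixes u :: "'k::field_char_0 usl2"
  assumes "adH u = 0"
  shows "u * (uXp * uXm) = (uXp * uXm) * u"
proof -
  have h: "u * uH = uH * u" using assms by (simp add: adH_def)
  have c1: "u * cas = cas * u" by (rule cas_central[symmetric])
  have c2: "u * (uH * uH) = (uH * uH) * u" by (metis h mult.assoc)
  have "u * (cas + uH + uH - uH * uH) = (cas + uH + uH - uH * uH) * u"
    by (simp only: distrib_left distrib_right right_diff_distrib left_diff_distrib c1 c2 h)
  then have e: "u * (of_int 4 * (uXp * uXm)) = (of_int 4 * (uXp * uXm)) * u" by (simp only: four_XpXm)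
  have a: "u * (of_int 4 * X) = of_int 4 * (u * X)" for X
  proof -
    have "u * of_int 4 = of_int 4 * u" by (metis mult_of_int_commute)
    then show ?thesis by (metis mult.assoc)
  qed
  have "of_int 4 * (u * (uXp * uXm)) = of_int 4 * ((uXp * uXm) * u)"
    using e by (simp only: a mult.assoc)
  then show ?thesis by (rule int_cancel[rotated]) simp
qed

lemma adE_add: "adE (x + y) = adE x + adE y" by (simp add: adE_def algebra_simps)
lemma adE_diff: "adE (x - y) = adE x - adE y" by (simp add: adE_def algebra_simps)
lemma adE_uminus: "adE (- x) = - adE x" by (simp add: adE_def algebra_simps)
lemma adE_zero: "adE 0 = 0" by (simp add: adE_def)
lemma adE_mult: "adE (x * y) = adE x * y + x * adE y" by (simp add: adE_def algebra_simps)
lemma adE_of: "adE (usl2_of c * x) = usl2_of c * adE x"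
proof -
  have "uXp * usl2_of c = usl2_of c * uXp" by (rule usl2_of_comm[symmetric])
  then show ?thesis unfolding adE_def right_diff_distrib by (metis mult.assoc)
qed
lemma adE_nat: "adE (of_nat n * x) = of_nat n * adE x"
  using adE_of[of "of_nat n" x] by (simp add: usl2_of_of_nat)
lemma adF_zero: "adF 0 = 0" by (simp add: adF_def)

lemma adEp_add: "(adE ^^ n) (x + y) = (adE ^^ n) x + (adE ^^ n) y"
  by (induction n) (simp_all add: adE_add)
lemma adEp_zero: "(adE ^^ n) 0 = 0"
  by (induction n) (simp_all add: adE_zero)
lemma adEp_of: "(adE ^^ n) (usl2_of c * x) = usl2_of c * (adE ^^ n) x"
  by (induction n) (simp_all add: adE_of)

lemma nil_mult: "a + b = n \<Longrightarrow> (adE ^^ a) x = 0 \<Longrightarrow> (adE ^^ b) y = 0 \<Longrightarrow> (adE ^^ n) (x * y) = 0"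
proof (induction n arbitrary: a b x y)
  case 0 then show ?case by simp
next
  case (Suc n)
  have e: "(adE ^^ Suc n) (x * y) = (adE ^^ n) (adE x * y) + (adE ^^ n) (x * adE y)"
    by (simp add: funpow_Suc_right adE_mult adEp_add del: funpow.simps)
  have t1: "(adE ^^ n) (adE x * y) = 0"
  proof (cases a)
    case 0 then show ?thesis using Suc.prems by (simp add: adE_zero adEp_zero)
  next
    case (Suc a')
    then have "(adE ^^ a') (adE x) = 0" using \<open>(adE ^^ a) x = 0\<close> by (simp add: funpow_Suc_right del: funpow.simps)
    then show ?thesis using Suc.IH[of a' b "adE x" y] Suc.prems \<open>a = Suc a'\<close> by simp
  qed
  have t2: "(adE ^^ n) (x * adE y) = 0"
  proof (cases b)
    case 0 then show ?thesis using Suc.prems by (simp add: adE_zero adEp_zero)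
  next
    case (Suc b')
    then have "(adE ^^ b') (adE y) = 0" using \<open>(adE ^^ b) y = 0\<close> by (simp add: funpow_Suc_right del: funpow.simps)
    then show ?thesis using Suc.IH[of a b' x "adE y"] Suc.prems \<open>b = Suc b'\<close> by simp
  qed
  show ?case using e t1 t2 by simp
qed

lemma nil_mono: "(adE ^^ a) x = 0 \<Longrightarrow> a \<le> m \<Longrightarrow> (adE ^^ m) x = 0"
proof -
  assume "(adE ^^ a) x = 0" "a \<le> m"
  then obtain d where "m = d + a" by (metis add.commute le_add_diff_inverse)
  then show ?thesis using \<open>(adE ^^ a) x = 0\<close> by (simp add: funpow_add adEp_zero)
qed

lemma adE_gu3: "(adE ^^ 3) (gu x :: 'k::comm_ring_1 usl2) = 0"
proof -
  have p: "adE (uXp :: 'k usl2) = 0" by (simp add: adE_def)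
  have h: "adE (uH :: 'k usl2) = - uXp - uXp" by (simp add: adE_def r3)
  have m: "adE (uXm :: 'k usl2) = uH" by (simp add: adE_def r1)
  show ?thesis by (cases x) (simp_all add: numeral_3_eq_3 p h m adE_diff adE_uminus adE_zero)
qed

lemma nil_mon: "(adE ^^ (3 * length l + 1)) (mon l :: 'k::comm_ring_1 usl2) = 0"
proof (induction l)
  case Nil then show ?case by (simp add: adE_def)
next
  case (Cons x l)
  show ?case using nil_mult[OF _ adE_gu3 Cons.IH, of "3 * length (x # l) + 1"] by simp
qed

lemma locnil: "\<exists>N. (adE ^^ N) (u :: 'k::comm_ring_1 usl2) = 0"
proof -
  obtain S c where u: "finite S" "u = (\<Sum>l\<in>S. usl2_of (c l) * mon l)" using span by blast
  define N where "N = (\<Sum>l\<in>S. 3 * length l + 1)"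
  have z: "(adE ^^ N) (usl2_of (c l) * (mon l :: 'k usl2)) = 0" if "l \<in> S" for l
  proof -
    have "3 * length l + 1 \<le> N" unfolding N_def using member_le_sum[of l S "\<lambda>l. 3 * length l + 1"] that u(1) by simp
    then show ?thesis by (simp add: adEp_of nil_mono[OF nil_mon])
  qed
  have sr: "(adE ^^ N) (sum f T) = (\<Sum>l\<in>T. (adE ^^ N) (f l))" for f :: "_ \<Rightarrow> 'k usl2" and T
    by (induction T rule: infinite_finite_induct) (simp_all add: adEp_add adEp_zero)
  have "(adE ^^ N) u = (\<Sum>l\<in>S. (adE ^^ N) (usl2_of (c l) * mon l))" unfolding u(2) by (rule sr)
  also have "\<dots> = 0" using z by simp
  finally have "(adE ^^ N) u = 0" .
  then show ?thesis by blast
qed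

lemma adH_adE: "adH (adE x) = adE (adH x) + adE x + adE (x :: 'k::comm_ring_1 usl2)"
  by (simp add: adH_def adE_def algebra_simps r3 r3')

lemma r1'': "z * (uXp * uXm) = z * (uXm * uXp) + z * (uH :: 'k::comm_ring_1 usl2)"
  by (simp add: r1 distrib_left)

lemma adF_adE: "adF (adE x) = adE (adF x) - adH (x :: 'k::comm_ring_1 usl2)"
  by (simp add: adH_def adE_def adF_def algebra_simps r1 r1')

lemma adH_nat: "adH (of_nat n * x) = of_nat n * adH x"
  using adH_of[of "of_nat n" x] by (simp add: usl2_of_of_nat)
lemma adF_add: "adF (x + y) = adF x + adF y" by (simp add: adF_def algebra_simps)
lemma adF_nat: "adF (of_nat n * x) = of_nat n * adF x"
proof -
  have "uXm * of_nat n = of_nat n * uXm" by (metis mult_of_nat_commute)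
  then show ?thesis unfolding adF_def right_diff_distrib by (metis mult.assoc)
qed
lemma adF_uminus: "adF (- x) = - adF x" by (simp add: adF_def algebra_simps)

lemma lw_H:
  assumes "adH w = w + (w :: 'k::comm_ring_1 usl2)"
  shows "adH ((adE ^^ k) w) = of_nat (2 * k + 2) * (adE ^^ k) w"
proof (induction k)
  case 0 then show ?case using assms by (simp add: mult_2)
next
  case (Suc k)
  have "adH ((adE ^^ Suc k) w) = adE (adH ((adE ^^ k) w)) + adE ((adE ^^ k) w) + adE ((adE ^^ k) w)"
    by (simp add: adH_adE)
  also have "\<dots> = of_nat (2 * k + 2) * adE ((adE ^^ k) w) + adE ((adE ^^ k) w) + adE ((adE ^^ k) w)"
    by (simp only: Suc adE_nat)
  also have "\<dots> = of_nat (2 * Suc k + 2) * (adE ^^ Suc k) w"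
    by (simp add: algebra_simps)
  finally show ?case .
qed

lemma lw_F:
  assumes h: "adH w = w + (w :: 'k::comm_ring_1 usl2)" and f: "adF w = 0"
  shows "adF ((adE ^^ Suc k) w) = - (of_nat ((k + 1) * (k + 2)) * (adE ^^ k) w)"
proof (induction k)
  case 0 then show ?case using h f by (simp add: adF_adE adE_zero mult_2)
next
  case (Suc k)
  have "adF ((adE ^^ Suc (Suc k)) w) = adE (adF ((adE ^^ Suc k) w)) - adH ((adE ^^ Suc k) w)"
    by (simp add: adF_adE)
  also have "\<dots> = - (of_nat ((k + 1) * (k + 2)) * (adE ^^ Suc k) w) - of_nat (2 * Suc k + 2) * (adE ^^ Suc k) w"
    by (simp only: Suc lw_H[OF h] adE_uminus adE_nat) simp
  also have "\<dots> = - (of_nat ((Suc k + 1) * (Suc k + 2)) * (adE ^^ Suc k) w)"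
  proof -
    have "(Suc k + 1) * (Suc k + 2) = (k + 1) * (k + 2) + (2 * Suc k + 2)" by simp
    then show ?thesis by (simp only: of_nat_add distrib_right) (simp add: algebra_simps)
  qed
  finally show ?case .
qed

lemma nat_cancel0:
  assumes "n \<noteq> 0" "of_nat n * x = (0 :: 'k::field_char_0 usl2)" shows "x = 0"
  using int_cancel[of "int n" x 0] assms by simp

lemma lw_zero:
  assumes h: "adH w = w + (w :: 'k::field_char_0 usl2)" and f: "adF w = 0"
  shows "(adE ^^ N) w = 0 \<Longrightarrow> w = 0"
proof (induction N)
  case 0 then show ?case by simp
next
  case (Suc k)
  have "- (of_nat ((k + 1) * (k + 2)) * (adE ^^ k) w) = 0"
    using lw_F[OF h f, of k] Suc.prems by (simp add: adF_zero)
  then have "of_nat ((k + 1) * (k + 2)) * (adE ^^ k) w = 0" by simp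
  then have "(adE ^^ k) w = 0" by (rule nat_cancel0[rotated]) simp
  then show ?case by (rule Suc.IH)
qed

lemma F3:
  assumes h: "adH w = w + (w :: 'k::field_char_0 usl2)" and f: "adF w = 0"
  shows "w = 0"
  using locnil[of w] lw_zero[OF h f] by blast


notation fps_nth (infixl "\<ddagger>" 75)

abbreviation sF :: "'k::comm_ring_1 \<Rightarrow> 'k usl2 fps" where "sF c \<equiv> fps_const (usl2_of c)"

definition extP :: "('k::comm_ring_1 usl2 \<Rightarrow> 'k usl2 fps) \<Rightarrow> 'k usl2 fps \<Rightarrow> 'k usl2 fps" where
  "extP P x = Abs_fps (\<lambda>n. \<Sum>i\<le>n. P (x \<ddagger> i) \<ddagger> (n - i))"

definition TT :: "('k::comm_ring_1 usl2 \<Rightarrow> 'k usl2 fps) \<Rightarrow> nat \<Rightarrow> 'k usl2 fps \<Rightarrow> 'k usl2 fps" where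
  "TT P N x = (\<Sum>i\<le>N. fps_X ^ i * P (x \<ddagger> i))"

context
  fixes P :: "'k::comm_ring_1 usl2 \<Rightarrow> 'k usl2 fps"
  assumes kP: "khom sF P"
begin

lemma P_add: "P (a + b) = P a + P b" using kP by (simp add: khom_def)
lemma P_mult: "P (a * b) = P a * P b" using kP by (simp add: khom_def)
lemma P_zero: "P 0 = 0" using kP by (rule khom_zero)
lemma P_sum: "P (sum f S) = (\<Sum>x\<in>S. P (f x))" using kP by (rule khom_sum)
lemma P_of: "P (usl2_of c) = sF c" using kP by (rule khom_of)
lemma P_one: "P 1 = 1" using kP by (simp add: khom_def)

lemma extP_nth: "extP P x \<ddagger> n = (\<Sum>i\<le>n. P (x \<ddagger> i) \<ddagger> (n - i))"
  by (simp add: extP_def)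

lemma TT_nth: "n \<le> N \<Longrightarrow> TT P N x \<ddagger> n = extP P x \<ddagger> n"
proof -
  assume nN: "n \<le> N"
  have "TT P N x \<ddagger> n = (\<Sum>i\<le>N. if n < i then 0 else P (x \<ddagger> i) \<ddagger> (n - i))"
    by (simp add: TT_def fps_sum_nth fps_X_power_mult_nth)
  also have "\<dots> = (\<Sum>i\<le>n. if n < i then 0 else P (x \<ddagger> i) \<ddagger> (n - i))"
    using nN by (intro sum.mono_neutral_right) auto
  also have "\<dots> = extP P x \<ddagger> n" by (simp add: extP_nth)
  finally show ?thesis .
qed

lemma TT_mult: "n \<le> N \<Longrightarrow> TT P N (x * y) \<ddagger> n = (TT P N x * TT P N y) \<ddagger> n"
proof -
  assume nN: "n \<le> N"
  define g where "g j l = fps_X ^ (j + l) * (P (x \<ddagger> j) * P (y \<ddagger> l))" for j l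
  have "TT P N (x * y) = (\<Sum>k\<le>N. \<Sum>i\<le>k. g i (k - i))"
    unfolding TT_def g_def
  proof (rule sum.cong[OF refl])
    fix k
    have "fps_X ^ k * P ((x * y) \<ddagger> k) = (\<Sum>i\<le>k. fps_X ^ k * (P (x \<ddagger> i) * P (y \<ddagger> (k - i))))"
      by (simp add: fps_mult_nth atLeast0AtMost P_sum P_mult sum_distrib_left)
    also have "\<dots> = (\<Sum>i\<le>k. fps_X ^ (i + (k - i)) * (P (x \<ddagger> i) * P (y \<ddagger> (k - i))))"
      by (rule sum.cong) auto
    finally show "fps_X ^ k * P ((x * y) \<ddagger> k) = (\<Sum>i\<le>k. fps_X ^ (i + (k - i)) * (P (x \<ddagger> i) * P (y \<ddagger> (k - i))))" .
  qed
  also have "\<dots> = (\<Sum>(j, l)\<in>{(j, l). j + l \<le> N}. g j l)"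
    by (rule sum.triangle_reindex_eq[symmetric])
  finally have t1: "TT P N (x * y) = (\<Sum>(j, l)\<in>{(j, l). j + l \<le> N}. g j l)" .
  have "TT P N x * TT P N y = (\<Sum>j\<le>N. \<Sum>l\<le>N. g j l)"
    unfolding TT_def g_def sum_product
  proof (intro sum.cong refl)
    fix j l
    show "fps_X ^ j * P (x \<ddagger> j) * (fps_X ^ l * P (y \<ddagger> l)) = fps_X ^ (j + l) * (P (x \<ddagger> j) * P (y \<ddagger> l))"
    proof -
      have "P (x \<ddagger> j) * fps_X ^ l = fps_X ^ l * P (x \<ddagger> j)" by (rule fps_mult_fps_X_power_commute[symmetric])
      then show ?thesis by (simp add: power_add mult.assoc) (simp add: mult.assoc[symmetric])
    qed
  qed
  also have "\<dots> = (\<Sum>(j, l)\<in>{..N} \<times> {..N}. g j l)"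
    by (simp add: sum.cartesian_product)
  finally have t2: "TT P N x * TT P N y = (\<Sum>(j, l)\<in>{..N} \<times> {..N}. g j l)" .
  have sub: "{(j, l). j + l \<le> N} \<subseteq> {..N} \<times> {..N}" by auto
  have fin: "finite ({..N} \<times> {..N})" by simp
  have "(\<Sum>(j, l)\<in>{..N} \<times> {..N}. g j l) \<ddagger> n = (\<Sum>(j, l)\<in>{..N} \<times> {..N}. g j l \<ddagger> n)"
    by (simp add: fps_sum_nth case_prod_unfold)
  also have "\<dots> = (\<Sum>(j, l)\<in>{(j, l). j + l \<le> N}. g j l \<ddagger> n)"
    using nN by (intro sum.mono_neutral_right[OF fin sub]) (auto simp: g_def fps_X_power_mult_nth split: if_splits)
  also have "\<dots> = (\<Sum>(j, l)\<in>{(j, l). j + l \<le> N}. g j l) \<ddagger> n"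
    by (simp add: fps_sum_nth case_prod_unfold)
  finally show ?thesis using t1 t2 by simp
qed

lemma extP_mult: "extP P (x * y) = extP P x * extP P y"
proof (rule fps_ext)
  fix n
  have "extP P (x * y) \<ddagger> n = TT P n (x * y) \<ddagger> n" by (simp add: TT_nth)
  also have "\<dots> = (TT P n x * TT P n y) \<ddagger> n" by (simp add: TT_mult)
  also have "\<dots> = (\<Sum>i=0..n. TT P n x \<ddagger> i * TT P n y \<ddagger> (n - i))" by (simp add: fps_mult_nth)
  also have "\<dots> = (\<Sum>i=0..n. extP P x \<ddagger> i * extP P y \<ddagger> (n - i))" by (rule sum.cong) (simp_all add: TT_nth)
  also have "\<dots> = (extP P x * extP P y) \<ddagger> n" by (simp add: fps_mult_nth)
  finally show "extP P (x * y) \<ddagger> n = (extP P x * extP P y) \<ddagger> n" .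
qed

lemma extP_add: "extP P (x + y) = extP P x + extP P y"
  by (rule fps_ext) (simp add: extP_nth P_add sum.distrib)

lemma extP_const: "extP P (fps_const u) = P u"
proof (rule fps_ext)
  fix n
  have "(\<Sum>i\<le>n. P (fps_const u \<ddagger> i) \<ddagger> (n - i)) = (\<Sum>i\<le>n. if i = 0 then P u \<ddagger> n else 0)"
    by (rule sum.cong) (auto simp: P_zero)
  then have "extP P (fps_const u) \<ddagger> n = (\<Sum>i\<le>n. if i = 0 then P u \<ddagger> n else 0)"
    by (simp add: extP_nth)
  then show "extP P (fps_const u) \<ddagger> n = P u \<ddagger> n" by simp
qed

lemma extP_diff: "extP P (x - y) = extP P x - extP P y"
  using extP_add[of "x - y" y] by (simp add: algebra_simps)

lemma kh_nth: "kh_scal f \<ddagger> n = usl2_of (f \<ddagger> n)" by (simp add: kh_scal_def)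

lemma extP_kh: "extP P (kh_scal f) = kh_scal f"
proof (rule fps_ext)
  fix n
  have "(\<Sum>i\<le>n. P (kh_scal f \<ddagger> i) \<ddagger> (n - i)) = (\<Sum>i\<le>n. if i = n then usl2_of (f \<ddagger> n) else 0)"
    by (rule sum.cong) (auto simp: kh_nth P_of)
  then show "extP P (kh_scal f) \<ddagger> n = kh_scal f \<ddagger> n" by (simp add: extP_nth kh_nth)
qed

lemma extP_one: "extP P 1 = 1"
  using extP_const[of 1] by (simp add: P_one)

context
  assumes P0: "\<And>u. P u \<ddagger> 0 = u"
begin

lemma extP_zero_imp: "extP P x = 0 \<Longrightarrow> x = 0"
proof (rule ccontr)
  assume e: "extP P x = 0" and x: "x \<noteq> 0"
  define m where "m = subdegree x"
  have "extP P x \<ddagger> m = (\<Sum>i\<le>m. if i = m then x \<ddagger> m else 0)"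
    unfolding extP_nth
  proof (rule sum.cong[OF refl])
    fix i assume "i \<in> {..m}"
    then show "P (x \<ddagger> i) \<ddagger> (m - i) = (if i = m then x \<ddagger> m else 0)"
      using nth_less_subdegree_zero[of i x] by (cases "i = m") (auto simp: m_def P0 P_zero)
  qed
  then have "extP P x \<ddagger> m = x \<ddagger> m" by simp
  then show False using e x by (simp add: m_def)
qed

lemma extP_inj: "inj (extP P)"
proof (rule injI)
  fix x y assume "extP P x = extP P y"
  then have "extP P (x - y) = 0" by (simp add: extP_diff)
  then have "x - y = 0" by (rule extP_zero_imp)
  then show "x = y" by simp
qed

end

end

function solv :: "('k::comm_ring_1 usl2 \<Rightarrow> 'k usl2 fps) \<Rightarrow> 'k usl2 fps \<Rightarrow> nat \<Rightarrow> 'k usl2" where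
  "solv P t n = t \<ddagger> n - (\<Sum>i<n. P (solv P t i) \<ddagger> (n - i))"
  by auto
termination by (relation "measure (\<lambda>(P, t, n). n)") auto

lemma extP_surj:
  assumes kP: "khom sF P" and P0: "\<And>u. P u \<ddagger> 0 = u"
  shows "extP P (Abs_fps (solv P t)) = t"
proof (rule fps_ext)
  fix n
  have "extP P (Abs_fps (solv P t)) \<ddagger> n = (\<Sum>i<Suc n. P (solv P t i) \<ddagger> (n - i))"
    by (simp only: extP_nth[OF kP] fps_nth_Abs_fps lessThan_Suc_atMost)
  also have "\<dots> = (\<Sum>i<n. P (solv P t i) \<ddagger> (n - i)) + solv P t n"
    by (simp only: sum.lessThan_Suc P0 diff_self_eq_0)
  also have "\<dots> = t \<ddagger> n" by (subst (2) solv.simps) (metis add.commute diff_add_cancel)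
  finally show "extP P (Abs_fps (solv P t)) \<ddagger> n = t \<ddagger> n" .
qed


lemma extP_bij:
  assumes kP: "khom sF P" and P0: "\<And>u. P u \<ddagger> 0 = u"
  shows "bij (extP P)"
proof (rule bijI)
  show "inj (extP P)" by (rule extP_inj[OF kP P0])
  show "surj (extP P)" by (rule surjI[where f="\<lambda>t. Abs_fps (solv P t)"]) (rule extP_surj[OF kP P0])
qed



lemma khn: "kh_scal f \<ddagger> n = usl2_of (f \<ddagger> n)" by (simp add: kh_scal_def)

lemma usl2_of_sum: "usl2_of (sum f S) = (\<Sum>x\<in>S. usl2_of (f x) :: 'k::comm_ring_1 usl2)"
  by (induction S rule: infinite_finite_induct) (simp_all add: usl2_of_add)

lemma kh_mult: "kh_scal (f * g) = kh_scal f * (kh_scal g :: 'k::comm_ring_1 usl2 fps)"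
  by (rule fps_ext) (simp add: khn fps_mult_nth usl2_of_sum usl2_of_mult)

lemma kh_add: "kh_scal (f + g) = kh_scal f + (kh_scal g :: 'k::comm_ring_1 usl2 fps)"
  by (rule fps_ext) (simp add: khn usl2_of_add)

lemma kh_central: "kh_scal f * x = x * (kh_scal f :: 'k::comm_ring_1 usl2 fps)"
proof (rule fps_ext)
  fix n
  have "(kh_scal f * x) \<ddagger> n = (\<Sum>i=0..n. usl2_of (f \<ddagger> i) * x \<ddagger> (n - i))" by (simp add: fps_mult_nth khn)
  also have "\<dots> = (\<Sum>i=0..n. usl2_of (f \<ddagger> (n - i)) * x \<ddagger> (n - (n - i)))"
    by (subst sum.atLeastAtMost_rev) simp
  also have "\<dots> = (\<Sum>i=0..n. x \<ddagger> i * usl2_of (f \<ddagger> (n - i)))"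
    by (rule sum.cong) (auto simp: usl2_of_comm)
  also have "\<dots> = (x * kh_scal f) \<ddagger> n" by (simp add: fps_mult_nth khn)
  finally show "(kh_scal f * x) \<ddagger> n = (x * kh_scal f) \<ddagger> n" .
qed

lemma kh_X: "kh_scal fps_X = (fps_X :: 'k::comm_ring_1 usl2 fps)"
  by (rule fps_ext) (simp add: khn fps_X_def)

lemma kh_const: "kh_scal (fps_const c) = (fps_const (usl2_of c) :: 'k::comm_ring_1 usl2 fps)"
  by (rule fps_ext) (simp add: khn)

lemma kh_one: "kh_scal 1 = (1 :: 'k::comm_ring_1 usl2 fps)"
  using kh_const[of 1] by simp

lemma fps_split0: "x = fps_const (x \<ddagger> 0) + fps_X * fps_shift 1 (x :: 'r::ring_1 fps)"
  by (rule fps_ext) simp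

lemma fps_X_factor: "x \<ddagger> 0 = 0 \<Longrightarrow> x = fps_X * fps_shift 1 (x :: 'r::ring_1 fps)"
  using fps_split0[of x] by simp

lemma comm_const_nth: "(fps_const a * x - x * fps_const a) \<ddagger> n = a * x \<ddagger> n - x \<ddagger> n * (a :: 'r::ring_1)"
  by simp

context
  fixes \<iota> :: "'k::field fps \<Rightarrow> 'a::ring_1" and g :: "'k usl2 fps \<Rightarrow> 'a"
  assumes gi: "kh_alg_iso \<iota> g"
begin

lemma g_add: "g (x + y) = g x + g y" using gi by (simp add: kh_alg_iso_def)
lemma g_mult: "g (x * y) = g x * g y" using gi by (simp add: kh_alg_iso_def)
lemma g_one: "g 1 = 1" using gi by (simp add: kh_alg_iso_def)
lemma g_kh: "g (kh_scal f * x) = \<iota> f * g x" using gi unfolding kh_alg_iso_def by blast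
lemma g_bij: "bij g" using gi by (simp add: kh_alg_iso_def)
lemma g_zero: "g 0 = 0" using g_add[of 0 0] by simp
lemma g_uminus: "g (- x) = - g x" using g_add[of x "-x"] by (simp add: g_zero eq_neg_iff_add_eq_0 add.commute)
lemma g_diff: "g (x - y) = g x - g y" using g_add[of x "-y"] by (simp add: g_uminus)
lemma g_inj: "g x = g y \<Longrightarrow> x = y" using g_bij by (simp add: bij_def inj_eq)
lemma g_inv: "g (inv g y) = y" using g_bij by (simp add: bij_is_surj surj_f_inv_f)
lemma inv_g: "inv g (g x) = x" using g_bij by (simp add: bij_is_inj)
lemma ginv_mult: "inv g (a * b) = inv g a * inv g b" by (rule g_inj) (simp add: g_mult g_inv)
lemma ginv_add: "inv g (a + b) = inv g a + inv g b" by (rule g_inj) (simp add: g_add g_inv)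
lemma ginv_diff: "inv g (a - b) = inv g a - inv g b" by (rule g_inj) (simp add: g_diff g_inv)
lemma g_X: "g (fps_X * x) = \<iota> fps_X * g x" using g_kh[of fps_X x] by (simp add: kh_X)

end

lemma modh_refl: "modh \<iota> a a" unfolding modh_def by (intro exI[of _ 0]) simp
lemma modh_sym: "modh \<iota> a b \<Longrightarrow> modh \<iota> b a"
  unfolding modh_def by (metis minus_diff_eq mult_minus_right)
lemma modh_trans: "modh \<iota> a b \<Longrightarrow> modh \<iota> b c \<Longrightarrow> modh \<iota> a c"
proof -
  assume "modh \<iota> a b" "modh \<iota> b c"
  then obtain u v where "a - b = \<iota> fps_X * u" "b - c = \<iota> fps_X * v" unfolding modh_def by blast
  have "a - c = (a - b) + (b - c)" by simp
  then have "a - c = \<iota> fps_X * (u + v)" using \<open>a - b = \<iota> fps_X * u\<close> \<open>b - c = \<iota> fps_X * v\<close> by (simp add: distrib_left)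
  then show ?thesis unfolding modh_def by blast
qed

section \<open>Existence construction\<close>

locale exist =
  fixes \<iota> :: "'k::field_char_0 fps \<Rightarrow> 'a::ring_1" and g0 :: "'k usl2 fps \<Rightarrow> 'a" and H Xm Xp :: 'a
  assumes gi: "kh_alg_iso \<iota> g0" and gH: "g0 (fps_const usl2_H) = H"
    and ba: "bar_a_iso \<iota> g0 H Xm Xp" and ar: "a_relations H Xm Xp"
begin

definition "Y = inv g0 Xm"

lemma Y0: "Y \<ddagger> 0 = uXm"
proof -
  have "modh \<iota> (g0 (fps_const uXm)) Xm" using ba by (simp add: bar_a_iso_def)
  then obtain c where c: "g0 (fps_const uXm) - Xm = \<iota> fps_X * c" unfolding modh_def by blast
  have e1: "g0 (fps_X * inv g0 c) = g0 (fps_const uXm) - Xm" using c by (simp add: g_X[OF gi] g_inv[OF gi])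
  have "g0 (fps_const uXm - fps_X * inv g0 c) = g0 (fps_const uXm) - (g0 (fps_const uXm) - Xm)"
    by (simp only: g_diff[OF gi] e1)
  also have "\<dots> = g0 Y" by (simp add: Y_def g_inv[OF gi])
  finally have "fps_const uXm - fps_X * inv g0 c = Y" by (rule g_inj[OF gi])
  then have "Y \<ddagger> 0 = (fps_const uXm - fps_X * inv g0 c) \<ddagger> 0" by simp
  then show ?thesis by simp
qed

lemma YH: "fps_const uH * Y - Y * fps_const uH = - (Y + Y)"
proof (rule g_inj[OF gi])
  have "g0 (fps_const uH * Y - Y * fps_const uH) = H * Xm - Xm * H"
    by (simp add: g_diff[OF gi] g_mult[OF gi] gH Y_def g_inv[OF gi])
  also have "\<dots> = - (Xm + Xm)" using ar by (simp add: a_relations_def mult_2)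
  also have "\<dots> = g0 (- (Y + Y))" by (simp only: g_uminus[OF gi] g_add[OF gi] Y_def g_inv[OF gi])
  finally show "g0 (fps_const uH * Y - Y * fps_const uH) = g0 (- (Y + Y))" .
qed

lemma Yn_weight: "adH (Y \<ddagger> n) = - (2 * (Y \<ddagger> n))"
proof -
  have "(fps_const uH * Y - Y * fps_const uH) \<ddagger> n = (- (Y + Y)) \<ddagger> n" by (simp only: YH)
  then show ?thesis by (simp add: adH_def mult_2)
qed

definition "bb n = (SOME b. Y \<ddagger> Suc n = uXm * b \<and> adH b = 0)"

lemma bb: "Y \<ddagger> Suc n = uXm * bb n \<and> adH (bb n) = 0"
  unfolding bb_def by (rule someI_ex) (rule weight_m2[OF Yn_weight])

definition "aa = Abs_fps (\<lambda>n. if n = 0 then 1 else bb (n - 1))"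

lemma Y_eq: "Y = fps_const uXm * aa"
proof (rule fps_ext)
  fix n show "Y \<ddagger> n = (fps_const uXm * aa) \<ddagger> n"
    by (cases n) (simp_all add: aa_def Y0 bb)
qed

lemma aa_adH: "adH (aa \<ddagger> n) = 0"
proof (cases n)
  case 0 then show ?thesis by (simp add: aa_def adH_def)
next
  case (Suc m) then show ?thesis by (simp add: aa_def bb)
qed

lemma aa0: "aa \<ddagger> 0 = 1" by (simp add: aa_def)

lemma aa_H: "fps_const uH * aa = aa * fps_const uH"
proof (rule fps_ext)
  fix n
  have "uH * aa \<ddagger> n = aa \<ddagger> n * uH" using aa_adH[of n] by (simp add: adH_def)
  then show "(fps_const uH * aa) \<ddagger> n = (aa * fps_const uH) \<ddagger> n" by simp
qed

lemma aa_K: "fps_const (uXp * uXm) * aa = aa * fps_const (uXp * uXm)"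
proof (rule fps_ext)
  fix n
  have "aa \<ddagger> n * (uXp * uXm) = (uXp * uXm) * aa \<ddagger> n" by (rule XpXm_comm[OF aa_adH])
  then show "(fps_const (uXp * uXm) * aa) \<ddagger> n = (aa * fps_const (uXp * uXm)) \<ddagger> n" by simp
qed

definition "ai = fps_left_inverse aa 1"

lemma ai_left: "ai * aa = 1" unfolding ai_def by (rule fps_left_inverse) (simp add: aa0)

lemma ai_right: "aa * ai = 1"
proof -
  have r: "aa * fps_right_inverse aa 1 = 1" by (rule fps_right_inverse) (simp add: aa0)
  have "ai = ai * (aa * fps_right_inverse aa 1)" by (simp add: r)
  also have "\<dots> = fps_right_inverse aa 1" by (simp add: mult.assoc[symmetric] ai_left)
  finally show ?thesis using r by simp
qed

lemma ai0: "ai \<ddagger> 0 = 1" by (simp add: ai_def)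

lemma ai_comm: "c * aa = aa * c \<Longrightarrow> c * ai = ai * c"
proof -
  assume h: "c * aa = aa * c"
  have "ai * c = ai * c * (aa * ai)" by (simp add: ai_right)
  also have "\<dots> = ai * (c * aa) * ai" by (simp add: mult.assoc)
  also have "\<dots> = ai * (aa * c) * ai" by (simp add: h)
  also have "\<dots> = c * ai" by (simp add: mult.assoc[symmetric] ai_left)
  finally show ?thesis by simp
qed

definition "Z = ai * fps_const uXp"

fun ee :: "gen \<Rightarrow> 'k usl2 fps" where
  "ee GH = fps_const uH" | "ee GXm = Y" | "ee GXp = Z"

lemma ee_rels: "rels ee"
proof -
  have hai: "fps_const uH * ai = ai * fps_const uH" by (rule ai_comm[OF aa_H])
  have kai: "fps_const (uXp * uXm) * ai = ai * fps_const (uXp * uXm)" by (rule ai_comm[OF aa_K])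
  have R1: "fps_const uH * Z - Z * fps_const uH = 2 * Z"
  proof -
    have "fps_const uH * Z = ai * fps_const (uH * uXp)"
      by (simp add: Z_def mult.assoc[symmetric] hai) (simp add: mult.assoc)
    moreover have "Z * fps_const uH = ai * fps_const (uXp * uH)" by (simp add: Z_def mult.assoc)
    ultimately have "fps_const uH * Z - Z * fps_const uH = ai * (fps_const (uH * uXp) - fps_const (uXp * uH))"
      by (simp only: right_diff_distrib)
    also have "\<dots> = ai * fps_const (uXp + uXp)" by (simp only: fps_const_sub rel_p mult_2)
    also have "\<dots> = Z + Z" by (simp only: Z_def distrib_left fps_const_add[symmetric])
    finally show ?thesis by (simp add: mult_2)
  qed
  have R2: "fps_const uH * Y - Y * fps_const uH = - (2 * Y)" using YH by (simp add: mult_2)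
  have R3: "Z * Y - Y * Z = fps_const uH"
  proof -
    have "Z * Y = ai * (fps_const uXp * fps_const uXm) * aa" by (simp only: Z_def Y_eq mult.assoc)
    also have "\<dots> = ai * fps_const (uXp * uXm) * aa" by (simp only: fps_const_mult)
    also have "\<dots> = ai * (aa * fps_const (uXp * uXm))" by (simp only: mult.assoc aa_K)
    also have "\<dots> = fps_const (uXp * uXm)" by (simp only: mult.assoc[symmetric] ai_left mult_1_left)
    finally have zy: "Z * Y = fps_const (uXp * uXm)" .
    have "Y * Z = fps_const uXm * (aa * ai) * fps_const uXp" by (simp only: Z_def Y_eq mult.assoc)
    then have yz: "Y * Z = fps_const (uXm * uXp)" by (simp add: ai_right fps_const_mult)
    show ?thesis using zy yz rel_pm[where 'k='k] by simp
  qed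
  show ?thesis unfolding rels_def using R1 R2 R3 by simp
qed

lemma goods_sF: "goods (sF :: 'k \<Rightarrow> 'k usl2 fps)"
  unfolding goods_def
proof (intro conjI allI)
  fix c :: 'k and x :: "'k usl2 fps"
  show "sF c * x = x * sF c" by (rule fps_ext) (simp add: usl2_of_comm)
qed (simp_all add: usl2_of_add usl2_of_mult)

definition "PP = ulift sF ee"

lemma PP_khom: "khom sF PP" unfolding PP_def by (rule universal(1)[OF goods_sF ee_rels])
lemma PP_gu: "PP (gu x) = ee x" unfolding PP_def by (rule universal(2)[OF goods_sF ee_rels])

lemma PP0: "PP u \<ddagger> 0 = u"
proof -
  have k1: "khom usl2_of (\<lambda>u. PP u \<ddagger> 0)"
    unfolding khom_def
  proof (intro conjI allI)
    have k: "khom sF PP" by (rule PP_khom)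
    show "PP 1 \<ddagger> 0 = 1" using k by (simp add: khom_def)
    fix a b show "PP (a + b) \<ddagger> 0 = PP a \<ddagger> 0 + PP b \<ddagger> 0" using k by (simp add: khom_def)
    show "PP (a * b) \<ddagger> 0 = PP a \<ddagger> 0 * PP b \<ddagger> 0" using k by (simp add: khom_def)
  next
    fix c u
    have "PP (usl2_of c * u) = sF c * PP u" using PP_khom unfolding khom_def by blast
    then show "PP (usl2_of c * u) \<ddagger> 0 = usl2_of c * PP u \<ddagger> 0" by simp
  qed
  have k2: "khom usl2_of (\<lambda>u::'k usl2. u)" unfolding khom_def by simp
  have "(\<lambda>u. PP u \<ddagger> 0) = (\<lambda>u. u)"
  proof (rule generation[OF k1 k2])
    fix x show "PP (gu x) \<ddagger> 0 = gu x"
      using PP_gu[of x] by (cases x) (simp_all add: Y0 Z_def ai0)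
  qed
  then show ?thesis by (metis)
qed

definition "psi = extP PP"

lemma psi_bij: "bij psi" unfolding psi_def by (rule extP_bij[OF PP_khom PP0])
lemma psi_mult: "psi (x * y) = psi x * psi y" unfolding psi_def by (rule extP_mult[OF PP_khom])
lemma psi_add: "psi (x + y) = psi x + psi y" unfolding psi_def by (rule extP_add[OF PP_khom])
lemma psi_one: "psi 1 = 1" unfolding psi_def by (rule extP_one[OF PP_khom])
lemma psi_kh: "psi (kh_scal f * x) = kh_scal f * psi x"
  unfolding psi_def by (simp add: extP_mult[OF PP_khom] extP_kh[OF PP_khom])
lemma psi_khs: "psi (kh_scal f) = kh_scal f" unfolding psi_def by (rule extP_kh[OF PP_khom])
lemma g0_khs: "g0 (kh_scal f) = \<iota> f" using g_kh[OF gi, of f 1] by (simp add: g_one[OF gi])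
lemma psi_const: "psi (fps_const u) = PP u" unfolding psi_def by (rule extP_const[OF PP_khom])

definition "g1 = g0 \<circ> psi"

lemma g1_iso: "kh_alg_iso \<iota> g1"
  unfolding kh_alg_iso_def g1_def
  using bij_comp[OF psi_bij g_bij[OF gi]]
  by (simp only: o_apply psi_one psi_add psi_mult psi_khs g0_khs g_one[OF gi] g_add[OF gi] g_mult[OF gi] simp_thms)

lemma g1_H: "g1 (fps_const uH) = H"
  using PP_gu[of GH] by (simp add: g1_def psi_const gH)

lemma g1_Xm: "g1 (fps_const uXm) = Xm"
  using PP_gu[of GXm] by (simp add: g1_def psi_const Y_def g_inv[OF gi])

lemma g1_close: "modh \<iota> (g1 (fps_const u)) (g0 (fps_const u))"
proof -
  have z: "(PP u - fps_const u) \<ddagger> 0 = 0" by (simp add: PP0)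
  have "g1 (fps_const u) - g0 (fps_const u) = g0 (PP u - fps_const u)"
    by (simp add: g1_def psi_const g_diff[OF gi])
  also have "\<dots> = g0 (fps_X * fps_shift 1 (PP u - fps_const u))" by (subst fps_X_factor[OF z]) simp
  also have "\<dots> = \<iota> fps_X * g0 (fps_shift 1 (PP u - fps_const u))" by (rule g_X[OF gi])
  finally show ?thesis unfolding modh_def by blast
qed

lemma g1_bar: "bar_a_iso \<iota> g1 H Xm Xp"
proof -
  note cl = g1_close and cls = modh_sym[OF g1_close]
  have b0: "modh \<iota> (g0 (fps_const 1)) 1" "\<forall>u. modh \<iota> (g0 (fps_const u)) 0 \<longrightarrow> u = 0"
    "\<forall>a. \<exists>u. modh \<iota> a (g0 (fps_const u))" "modh \<iota> (g0 (fps_const uXp)) Xp"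
    using ba by (simp_all add: bar_a_iso_def)
  note iso = g1_iso
  show ?thesis unfolding bar_a_iso_def
  proof (intro conjI allI impI)
    show "modh \<iota> (g1 (fps_const 1)) 1" using modh_trans[OF cl b0(1)] .
    fix u v
    show "modh \<iota> (g1 (fps_const (u + v))) (g1 (fps_const u) + g1 (fps_const v))"
      by (subst fps_const_add[symmetric]) (simp only: g_add[OF iso] modh_refl)
    show "modh \<iota> (g1 (fps_const (u * v))) (g1 (fps_const u) * g1 (fps_const v))"
      by (subst fps_const_mult[symmetric]) (simp only: g_mult[OF iso] modh_refl)
  next
    fix c u
    show "modh \<iota> (g1 (fps_const (usl2_of c * u))) (\<iota> (fps_const c) * g1 (fps_const u))"
      using g_kh[OF iso, of "fps_const c" "fps_const u"] by (simp add: kh_const modh_refl)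
  next
    fix u assume "modh \<iota> (g1 (fps_const u)) 0"
    then show "u = 0" using b0(2) modh_trans[OF cls] by blast
  next
    fix a
    obtain u where "modh \<iota> a (g0 (fps_const u))" using b0(3) by blast
    then show "\<exists>u. modh \<iota> a (g1 (fps_const u))" using modh_trans[OF _ cls] by blast
  next
    show "modh \<iota> (g1 (fps_const uH)) H" by (simp add: g1_H modh_refl)
    show "modh \<iota> (g1 (fps_const uXm)) Xm" by (simp add: g1_Xm modh_refl)
    show "modh \<iota> (g1 (fps_const uXp)) Xp" using modh_trans[OF cl b0(4)] .
  qed
qed

end

section \<open>Uniqueness\<close>

lemma cc: "fps_const (a * b - b * a) = fps_const a * fps_const b - fps_const b * (fps_const a :: 'r::ring_1 fps)"
  by simp

lemma uniq:
  fixes \<iota> :: "'k::field_char_0 fps \<Rightarrow> 'a::ring_1"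
  assumes i1: "kh_alg_iso \<iota> g1" and i2: "kh_alg_iso \<iota> g2"
    and h1: "g1 (fps_const uH) = H" and h2: "g2 (fps_const uH) = H"
    and m1: "g1 (fps_const uXm) = Xm" and m2: "g2 (fps_const uXm) = Xm"
  shows "g1 = g2"
proof -
  define P' where "P' = inv g1 (g2 (fps_const uXp))"
  have iH: "inv g1 H = fps_const uH" using h1 inv_g[OF i1] by metis
  have iXm: "inv g1 Xm = fps_const uXm" using m1 inv_g[OF i1] by metis
  have "fps_const uH * P' - P' * fps_const uH = inv g1 (H * g2 (fps_const uXp) - g2 (fps_const uXp) * H)"
    by (simp add: P'_def ginv_diff[OF i1] ginv_mult[OF i1] iH)
  also have "H * g2 (fps_const uXp) - g2 (fps_const uXp) * H = g2 (fps_const (uH * uXp - uXp * uH))"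
    by (simp only: h2[symmetric] g_mult[OF i2, symmetric] g_diff[OF i2, symmetric] fps_const_mult fps_const_sub)
  also have "\<dots> = g2 (fps_const uXp) + g2 (fps_const uXp)"
    by (simp only: rel_p mult_2 fps_const_add[symmetric] g_add[OF i2])
  finally have e1: "fps_const uH * P' - P' * fps_const uH = P' + P'" by (simp add: ginv_add[OF i1] P'_def)
  have "P' * fps_const uXm - fps_const uXm * P' = inv g1 (g2 (fps_const uXp) * Xm - Xm * g2 (fps_const uXp))"
    by (simp add: P'_def ginv_diff[OF i1] ginv_mult[OF i1] iXm)
  also have "g2 (fps_const uXp) * Xm - Xm * g2 (fps_const uXp) = g2 (fps_const (uXp * uXm - uXm * uXp))"
    by (simp only: m2[symmetric] g_mult[OF i2, symmetric] g_diff[OF i2, symmetric] fps_const_mult fps_const_sub)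
  also have "\<dots> = H" by (simp only: rel_pm h2)
  finally have e2: "P' * fps_const uXm - fps_const uXm * P' = fps_const uH" by (simp add: iH)
  define D where "D = P' - fps_const uXp"
  have "D = 0"
  proof (rule fps_ext)
    fix n
    have a1: "(fps_const uH * D - D * fps_const uH) \<ddagger> n = (D + D) \<ddagger> n"
    proof -
      have "fps_const uH * D - D * fps_const uH = (fps_const uH * P' - P' * fps_const uH) - fps_const (uH * uXp - uXp * uH)"
        unfolding cc D_def by (simp add: algebra_simps del: fps_const_mult)
      also have "\<dots> = D + D" by (simp only: e1 rel_p mult_2 fps_const_add[symmetric] D_def) (simp add: algebra_simps)
      finally show ?thesis by simp
    qed
    have a2: "(D * fps_const uXm - fps_const uXm * D) \<ddagger> n = 0"
    proof -
      have "D * fps_const uXm - fps_const uXm * D = (P' * fps_const uXm - fps_const uXm * P') - fps_const (uXp * uXm - uXm * uXp)"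
        unfolding cc D_def by (simp add: algebra_simps del: fps_const_mult)
      also have "\<dots> = 0" by (simp only: e2 rel_pm) simp
      finally show ?thesis by simp
    qed
    have "adH (D \<ddagger> n) = D \<ddagger> n + D \<ddagger> n" using a1 by (simp add: adH_def)
    moreover have "adF (D \<ddagger> n) = 0" using a2 by (simp add: adF_def)
    ultimately have "D \<ddagger> n = 0" by (rule F3)
    then show "D \<ddagger> n = 0 \<ddagger> n" by simp
  qed
  then have "P' = fps_const uXp" by (simp add: D_def)
  then have p: "g2 (fps_const uXp) = g1 (fps_const uXp)" by (metis P'_def g_inv[OF i1])
  have kh: "khom (\<lambda>c. \<iota> (fps_const c)) (\<lambda>u. g (fps_const u))" if i: "kh_alg_iso \<iota> g" for g
    unfolding khom_def
  proof (intro conjI allI)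
    show "g (fps_const 1) = 1" using g_one[OF i] by simp
    fix a b
    show "g (fps_const (a + b)) = g (fps_const a) + g (fps_const b)"
      by (subst fps_const_add[symmetric]) (rule g_add[OF i])
    show "g (fps_const (a * b)) = g (fps_const a) * g (fps_const b)"
      by (subst fps_const_mult[symmetric]) (rule g_mult[OF i])
  next
    fix c u
    show "g (fps_const (usl2_of c * u)) = \<iota> (fps_const c) * g (fps_const u)"
      using g_kh[OF i, of "fps_const c" "fps_const u"] by (simp add: kh_const)
  qed
  have gc: "(\<lambda>u. g1 (fps_const u)) = (\<lambda>u. g2 (fps_const u))"
  proof (rule generation[OF kh[OF i1] kh[OF i2]])
    fix x show "g1 (fps_const (gu x)) = g2 (fps_const (gu x))"
      by (cases x) (simp_all add: h1 h2 m1 m2 p)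
  qed
  define th where "th x = inv g1 (g2 x)" for x
  have thc: "th (fps_const u) = fps_const u" for u
    by (metis th_def gc inv_g[OF i1])
  have thX: "th (fps_X * y) = fps_X * th y" for y
    by (simp add: th_def g_X[OF i2] ginv_mult[OF i1]) (metis g_X[OF i1] g_inv[OF i1] inv_g[OF i1] ginv_mult[OF i1])
  have tha: "th (x + y) = th x + th y" for x y by (simp add: th_def g_add[OF i2] ginv_add[OF i1])
  have "\<forall>x. th x \<ddagger> m = x \<ddagger> m" for m
  proof (induction m)
    case 0 show ?case
    proof
      fix x
      have "th x = fps_const (x \<ddagger> 0) + fps_X * th (fps_shift 1 x)"
        by (subst fps_split0[of x]) (simp only: tha thc thX)
      then show "th x \<ddagger> 0 = x \<ddagger> 0" by simp
    qed
  next
    case (Suc m) show ?case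
    proof
      fix x
      have "th x = fps_const (x \<ddagger> 0) + fps_X * th (fps_shift 1 x)"
        by (subst fps_split0[of x]) (simp only: tha thc thX)
      then show "th x \<ddagger> Suc m = x \<ddagger> Suc m" using Suc by simp
    qed
  qed
  then have "th x = x" for x by (simp add: fps_ext)
  then have "g2 x = g1 x" for x by (metis th_def g_inv[OF i1])
  then show ?thesis by (simp add: fun_eq_iff)
qed

theorem mainTheorem12:
  fixes sc :: "'k::field_char_0 \<Rightarrow> 'v::ab_group_add \<Rightarrow> 'v"
    and \<phi> :: "'v fps \<Rightarrow> 'a::ring_1"
    and \<iota> :: "'k fps \<Rightarrow> 'a"
    and H Xm Xp :: 'a
  assumes "formal_deformation sc \<phi> \<iota> H Xm Xp"
    and "h_trivial \<iota> H Xm Xp"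
  shows "\<exists>!g. kh_alg_iso \<iota> g \<and> g (fps_const usl2_H) = H \<and> g (fps_const usl2_Xm) = Xm \<and>
             bar_a_iso \<iota> g H Xm Xp"
proof -
  have ar: "a_relations H Xm Xp" using assms(1) by (simp add: formal_deformation_def)
  obtain g0 where g0: "kh_alg_iso \<iota> g0" "g0 (fps_const usl2_H) = H" "bar_a_iso \<iota> g0 H Xm Xp"
    using assms(2) unfolding h_trivial_def by blast
  interpret e: exist \<iota> g0 H Xm Xp by (unfold_locales) (use g0 ar in auto)
  show ?thesis
  proof (rule ex1I[of _ e.g1])
    show "kh_alg_iso \<iota> e.g1 \<and> e.g1 (fps_const usl2_H) = H \<and> e.g1 (fps_const usl2_Xm) = Xm \<and> bar_a_iso \<iota> e.g1 H Xm Xp"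
      using e.g1_iso e.g1_H e.g1_Xm e.g1_bar by simp
    fix g assume "kh_alg_iso \<iota> g \<and> g (fps_const usl2_H) = H \<and> g (fps_const usl2_Xm) = Xm \<and> bar_a_iso \<iota> g H Xm Xp"
    then show "g = e.g1" using uniq[of \<iota> g e.g1 H Xm] e.g1_iso e.g1_H e.g1_Xm by blast
  qed
qed


end
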